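(* Let $u^2_{2n}$ denote the coefficient of $a^4$ in the Taylor expansion $u_{2n}(a)=u^0_{2n}+u^1_{2n}a^2+u^2_{2n}a^4+O(a^6)$ at $a=0$. Then $$u^2_2=1,\quad u^2_4=\frac{63}{64},\quad u^2_6=\frac{2917}{2592},\quad u^2_8=\frac{335485}{331776},\quad u^2_{10}=\frac{382273}{460800},$$ and for $n=6,7,\dots$, $$u^2_{2n}=\frac{61^2}{12^4}\,\frac{(n+1)^2}{2^{n+1}}\Bigl(n+\frac{2^2\,29^2\,89}{5^2\,61^2}\Bigr).$$
   Context: The rational functions $u_{2n}(a)$ (which depend on $a$ only through $a^2$) are defined by $(a^2+1)u_2=1$ and, for $n\ge2$, $(a^2+n^2)u_{2n}=3u_{2(n-1)}+3\sum_{j_1+j_2=n-1}u_{2j_1}u_{2j_2}+\sum_{j_1+j_2+j_3=n-1}u_{2j_1}u_{2j_2}u_{2j_3}-\sum_{1\le j_1,\,2j_1<n}(n-2j_1)^2u_{2j_1}u_{2(n-j_1)}$, all indices $j_i\ge1$. *)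

theory Defs
  imports "HOL-Computational_Algebra.Formal_Power_Series"
begin

text \<open>uu n is the Taylor expansion at a = 0 (a formal power series in the variable a)
 of the rational function u_{2n}(a), for n \<ge> 1; uu 0 = 0 is a dummy value.\<close>

fun uu :: "nat \<Rightarrow> real fps" where
  "uu 0 = 0"
| "uu (Suc 0) = inverse (fps_X ^ 2 + 1)"
| "uu (Suc (Suc m)) =
     (let n = Suc (Suc m) in
      inverse (fps_X ^ 2 + fps_const (real (n ^ 2))) *
      ( 3 * uu (n - 1)
      + 3 * (\<Sum>j1 \<in> {1..n - 2}. uu j1 * uu (n - 1 - j1))
      + (\<Sum>j1 \<in> {1..n - 3}. \<Sum>j2 \<in> {1..n - 2 - j1}. uu j1 * uu j2 * uu (n - 1 - j1 - j2))
      - (\<Sum>j1 \<in> {j. 1 \<le> j \<and> 2 * j < n}.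
           fps_const (real ((n - 2 * j1) ^ 2)) * uu j1 * uu (n - j1))))"

end

theory Submission
  imports Defs
begin

definition PA :: "real \<Rightarrow> real" where "PA t = t + 1"
definition PB :: "real \<Rightarrow> real" where "PB t = -(61/144) * (t + 1)^2"
definition PC :: "real \<Rightarrow> real" where "PC t = 3721/41472 * (t + 1)^2 * (t + 299396/93025)"
definition Q0 :: "real \<Rightarrow> real" where "Q0 t = (- 1 - 1/6 * t + t^2 + 1/6 * t^3)"
definition Q2 :: "real \<Rightarrow> real" where "Q2 t = (13/18 + 17/216 * t - 671/864 * t^2 - 61/108 * t^3 - 61/864 * t^4)"
definition Q4 :: "real \<Rightarrow> real" where "Q4 t = (- 17009/34560 - 15823/518400 * t + 4853431/6220800 * t^2 + 4162643/6220800 * t^3 + 1136621/6220800 * t^4 + 3721/248832 * t^5)"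

definition al :: "nat \<Rightarrow> real" where "al n = (if n = 0 then 0 else PA (real n))"
definition be :: "nat \<Rightarrow> real" where
  "be n = (if n = 0 then 0 else if n = 1 then -2 else if n = 2 then -15/4 else PB (real n))"
definition ga :: "nat \<Rightarrow> real" where
  "ga n = (if n = 0 then 0 else if n = 1 then 2 else if n = 2 then 63/16 else if n = 3 then 2917/324
     else if n = 4 then 335485/20736 else if n = 5 then 382273/14400 else PC (real n))"

definition om0 :: "nat \<Rightarrow> real" where
  "om0 m = (\<Sum>j=1..m-1. al j * al (m-j))"
definition om2 :: "nat \<Rightarrow> real" where
  "om2 m = (\<Sum>j=1..m-1. al j * be (m-j) + be j * al (m-j))"
definition om4 :: "nat \<Rightarrow> real" where
  "om4 m = (\<Sum>j=1..m-1. al j * ga (m-j) + be j * be (m-j) + ga j * al (m-j))"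

definition S30 where "S30 n = (\<Sum>j=1..n-3. al j * om0 (n-1-j))"
definition S32 where "S32 n = (\<Sum>j=1..n-3. al j * om2 (n-1-j) + be j * om0 (n-1-j))"
definition S34 where "S34 n = (\<Sum>j=1..n-3. al j * om4 (n-1-j) + be j * om2 (n-1-j) + ga j * om0 (n-1-j))"
definition T0 where "T0 n = (\<Sum>j\<in>{j. 1 \<le> j \<and> 2*j < n}. real ((n-2*j)^2) * al j * al (n-j))"
definition T2 where "T2 n = (\<Sum>j\<in>{j. 1 \<le> j \<and> 2*j < n}.
    real ((n-2*j)^2) * al j * be (n-j) + real ((n-2*j)^2) * be j * al (n-j))"
definition T4 where "T4 n = (\<Sum>j\<in>{j. 1 \<le> j \<and> 2*j < n}.
    real ((n-2*j)^2) * al j * ga (n-j) + real ((n-2*j)^2) * be j * be (n-j) + real ((n-2*j)^2) * ga j * al (n-j))"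

lemma abc_vals: "al 1 = 2" "be 1 = -2" "be 2 = -15/4" "ga 1 = 2" "ga 2 = 63/16" "ga 3 = 2917/324"
  "ga 4 = 335485/20736" "ga 5 = 382273/14400" by (simp_all add: al_def be_def ga_def PA_def)

lemmas vals = abc_vals

lemma thr_al: "0 < j \<Longrightarrow> al j = PA (real j)" by (simp add: al_def)
lemma thr_be: "2 < j \<Longrightarrow> be j = PB (real j)" by (simp add: be_def)
lemma thr_ga: "5 < j \<Longrightarrow> ga j = PC (real j)" by (simp add: ga_def)

lemma sumSuc: "(\<Sum>j=1..Suc N. f j) = (\<Sum>j=1..N. f j) + (f (Suc N) :: real)" by simp

lemma sumE0: "(\<Sum>j::nat=1..0. f j) = (0::real)" by simp
lemma sumE1: "(\<Sum>j::nat=1..1. f j) = (f 1 :: real)" by simp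
lemma sumE2: "(\<Sum>j::nat=1..2. f j) = f 1 + (f 2 :: real)" by (simp add: eval_nat_numeral)
lemma sumE3: "(\<Sum>j::nat=1..3. f j) = f 1 + f 2 + (f 3 :: real)" by (simp add: eval_nat_numeral)
lemma sumE4: "(\<Sum>j::nat=1..4. f j) = f 1 + f 2 + f 3 + (f 4 :: real)" by (simp add: eval_nat_numeral)
lemma sumE5: "(\<Sum>j::nat=1..5. f j) = f 1 + f 2 + f 3 + f 4 + (f 5 :: real)" by (simp add: eval_nat_numeral)
lemma sumE6: "(\<Sum>j::nat=1..6. f j) = f 1 + f 2 + f 3 + f 4 + f 5 + (f 6 :: real)" by (simp add: eval_nat_numeral)
lemma sumE7: "(\<Sum>j::nat=1..7. f j) = f 1 + f 2 + f 3 + f 4 + f 5 + f 6 + (f 7 :: real)" by (simp add: eval_nat_numeral)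

lemma sumS1: "(\<Sum>j::nat=Suc 0..1. f j) = (f 1 :: real)" by (simp add: eval_nat_numeral)
lemma sumS2: "(\<Sum>j::nat=Suc 0..2. f j) = f 1 + (f 2 :: real)" by (simp add: eval_nat_numeral)
lemma sumS3: "(\<Sum>j::nat=Suc 0..3. f j) = f 1 + f 2 + (f 3 :: real)" by (simp add: eval_nat_numeral)
lemma sumS4: "(\<Sum>j::nat=Suc 0..4. f j) = f 1 + f 2 + f 3 + (f 4 :: real)" by (simp add: eval_nat_numeral)
lemma sumS5: "(\<Sum>j::nat=Suc 0..5. f j) = f 1 + f 2 + f 3 + f 4 + (f 5 :: real)" by (simp add: eval_nat_numeral)
lemma sumS6: "(\<Sum>j::nat=Suc 0..6. f j) = f 1 + f 2 + f 3 + f 4 + f 5 + (f 6 :: real)" by (simp add: eval_nat_numeral)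
lemma sumS7: "(\<Sum>j::nat=Suc 0..7. f j) = f 1 + f 2 + f 3 + f 4 + f 5 + f 6 + (f 7 :: real)" by (simp add: eval_nat_numeral)
lemmas sumS = sumS1 sumS2 sumS3 sumS4 sumS5 sumS6 sumS7 sumE1 sumE2 sumE3 sumE4 sumE5 sumE6 sumE7

lemma conv_split:
  fixes s t p q w :: "nat \<Rightarrow> real"
  assumes s: "\<And>j. K < j \<Longrightarrow> s j = p j" and t: "\<And>j. L < j \<Longrightarrow> t j = q j"
    and m: "K + L + 2 \<le> m"
  shows "(\<Sum>j=1..m-1. w j * (s j * t (m-j))) =
     (\<Sum>j=1..m-1. w j * (p j * q (m-j))) + (\<Sum>j=1..K. w j * ((s j - p j) * q (m-j)))
     + (\<Sum>k=1..L. w (m-k) * (p (m-k) * (t k - q k)))"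
proof -
  have e: "w j * (s j * t (m-j)) = w j * (p j * q (m-j)) + w j * ((s j - p j) * q (m-j))
      + w j * (p j * (t (m-j) - q (m-j))) + w j * ((s j - p j) * (t (m-j) - q (m-j)))" for j
    by algebra
  have z: "w j * ((s j - p j) * (t (m-j) - q (m-j))) = 0" if "j \<in> {1..m-1}" for j
  proof (cases "K < j")
    case True then show ?thesis using s by simp
  next
    case False then have "L < m - j" using m that by auto
    then show ?thesis using t by simp
  qed
  have 1: "(\<Sum>j=1..m-1. w j * ((s j - p j) * q (m-j))) = (\<Sum>j=1..K. w j * ((s j - p j) * q (m-j)))"
    by (rule sum.mono_neutral_right) (use m s in auto)
  have 2: "(\<Sum>j=1..m-1. w j * (p j * (t (m-j) - q (m-j)))) = (\<Sum>k=1..L. w (m-k) * (p (m-k) * (t k - q k)))"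
  proof -
    define h where "h j = w j * (p j * (t (m-j) - q (m-j)))" for j
    have "(\<Sum>k=1..L. w (m-k) * (p (m-k) * (t k - q k))) = (\<Sum>k=1..L. h (m - k))"
      by (rule sum.cong) (use m in \<open>auto simp: h_def\<close>)
    also have "... = (\<Sum>j\<in>(\<lambda>k. m - k) ` {1..L}. h j)"
      by (rule sum.reindex[symmetric, unfolded comp_def]) (use m in \<open>auto simp: inj_on_def\<close>)
    also have "... = (\<Sum>j=1..m-1. h j)"
    proof (rule sum.mono_neutral_left)
      show "(\<lambda>k. m - k) ` {1..L} \<subseteq> {1..m-1}" using m by auto
      show "\<forall>i\<in>{1..m - 1} - (\<lambda>k. m - k) ` {1..L}. h i = 0"
      proof
        fix i assume i: "i \<in> {1..m - 1} - (\<lambda>k. m - k) ` {1..L}"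
        have "L < m - i"
        proof (rule ccontr)
          assume "\<not> L < m - i"
          then have "m - i \<in> {1..L}" "i = m - (m - i)" using i by auto
          then show False using i by blast
        qed
        then show "h i = 0" using t by (simp add: h_def)
      qed
    qed simp
    finally show ?thesis by (simp add: h_def)
  qed
  have "(\<Sum>j=1..m-1. w j * (s j * t (m-j))) =
     (\<Sum>j=1..m-1. w j * (p j * q (m-j))) + (\<Sum>j=1..m-1. w j * ((s j - p j) * q (m-j)))
      + (\<Sum>j=1..m-1. w j * (p j * (t (m-j) - q (m-j)))) + (\<Sum>j=1..m-1. w j * ((s j - p j) * (t (m-j) - q (m-j))))"
    unfolding e by (simp add: sum.distrib)
  also have "(\<Sum>j=1..m-1. w j * ((s j - p j) * (t (m-j) - q (m-j)))) = 0"
    using z by (intro sum.neutral) blast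
  finally show ?thesis using 1 2 by simp
qed

lemma conv_split1:
  fixes s t p q :: "nat \<Rightarrow> real"
  assumes s: "\<And>j. K < j \<Longrightarrow> s j = p j" and t: "\<And>j. L < j \<Longrightarrow> t j = q j"
    and m: "K + L + 2 \<le> m"
  shows "(\<Sum>j=1..m-1. s j * t (m-j)) =
     (\<Sum>j=1..m-1. p j * q (m-j)) + (\<Sum>j=1..K. (s j - p j) * q (m-j))
     + (\<Sum>k=1..L. p (m-k) * (t k - q k))"
  using conv_split[of K s p L t q m "\<lambda>_. 1", OF s t m] by simp

lemma T_sym:
  fixes G :: "nat \<Rightarrow> nat \<Rightarrow> real"
  assumes G: "\<And>j k. G j k = G k j"
  shows "(\<Sum>j\<in>{j. 1 \<le> j \<and> 2*j < n}. real ((n-2*j)^2) * G j (n-j)) =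
    1/2 * (\<Sum>j=1..n-1. (real n - 2*real j)^2 * G j (n-j))"
proof -
  define f where "f j = (real n - 2*real j)^2 * G j (n-j)" for j
  let ?A = "{j. 1 \<le> j \<and> 2*j < n}"
  let ?B = "{j. j \<le> n-1 \<and> n < 2*j}"
  let ?C = "{j. 1 \<le> j \<and> j \<le> n-1 \<and> n \<le> 2*j}"
  have finA: "finite ?A" by (rule finite_subset[of _ "{..n}"]) auto
  have finC: "finite ?C" by (rule finite_subset[of _ "{..n}"]) auto
  have A: "(\<Sum>j\<in>?A. real ((n-2*j)^2) * G j (n-j)) = (\<Sum>j\<in>?A. f j)"
    by (rule sum.cong) (auto simp: f_def of_nat_diff)
  have spl: "{1..n-1} = ?A \<union> ?C" by auto
  have full: "(\<Sum>j=1..n-1. f j) = (\<Sum>j\<in>?A. f j) + (\<Sum>j\<in>?C. f j)"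
    unfolding spl by (rule sum.union_disjoint) (use finA finC in auto)
  have CB: "(\<Sum>j\<in>?C. f j) = (\<Sum>j\<in>?B. f j)"
  proof (rule sum.mono_neutral_right[OF finC])
    show "?B \<subseteq> ?C" by auto
    show "\<forall>i\<in>?C - ?B. f i = 0"
    proof
      fix i assume "i \<in> ?C - ?B"
      then have "n = 2 * i" by auto
      then have "real n - 2 * real i = 0" by simp
      then show "f i = 0" by (simp add: f_def)
    qed
  qed
  have fs: "f (n - a) = f a" if "a \<le> n" for a
  proof -
    have "f (n - a) = (real n - 2 * real (n - a))^2 * G (n-a) (n - (n-a))" by (simp add: f_def)
    also have "... = (real n - 2 * real a)^2 * G a (n - a)"
      using that by (simp add: of_nat_diff G[of "n-a"] power2_commute algebra_simps)
    finally show ?thesis by (simp add: f_def)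
  qed
  have BA: "(\<Sum>j\<in>?B. f j) = (\<Sum>j\<in>?A. f j)"
    by (rule sum.reindex_bij_witness[of _ "\<lambda>j. n - j" "\<lambda>j. n - j"]) (use fs in auto)
  have eqf: "(\<lambda>j. (real n - 2*real j)^2 * G j (n-j)) = f" by (simp add: f_def fun_eq_iff)
  show ?thesis unfolding A eqf using full CB BA by simp
qed

lemma sum_ext3:
  fixes n :: nat
  assumes "3 \<le> n" "F (n-2) = (0::real)"
  shows "(\<Sum>j=1..n-3. F j) = (\<Sum>j=1..n-1-1. F j)"
proof -
  have e: "n - 1 - 1 = Suc (n - 3)" using assms by auto
  have e2: "Suc (n-3) = n-2" using assms by auto
  have f: "F (Suc (n-3)) = 0" unfolding e2 by (rule assms(2))
  show ?thesis unfolding e sumSuc f by simp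
qed

lemma anti_AA: "(\<Sum>j=1..N. PA (real j) * PA (x - real j)) = (5/6 * real N + 3/2 * real N * x - 1/2 * real N^2 + 1/2 * real N^2 * x - 1/3 * real N^3)"
proof (induction N)
  case 0 then show ?case by simp
next
  case (Suc N)
  have "(\<Sum>j=1..Suc N. PA (real j) * PA (x - real j)) = (5/6 * real N + 3/2 * real N * x - 1/2 * real N^2 + 1/2 * real N^2 * x - 1/3 * real N^3) + PA (real (Suc N)) * PA (x - real (Suc N))"
    by (simp only: sumSuc Suc.IH)
  also have "... = (5/6 * real (Suc N) + 3/2 * real (Suc N) * x - 1/2 * real (Suc N)^2 + 1/2 * real (Suc N)^2 * x - 1/3 * real (Suc N)^3)" unfolding PA_def of_nat_Suc by algebra
  finally show ?case .
qed

lemma main_AA: assumes m: "1 \<le> m" shows "(\<Sum>j=1..m-1. PA (real j) * PA (real (m - j))) = (- 1 - 1/6 * real m + real m^2 + 1/6 * real m^3)"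
proof -
  have "(\<Sum>j=1..m-1. PA (real j) * PA (real (m - j))) = (\<Sum>j=1..m-1. PA (real j) * PA (real m - real j))"
    by (rule sum.cong) (auto simp: of_nat_diff)
  also have "... = (5/6 * real (m - 1) + 3/2 * real (m - 1) * real m - 1/2 * real (m - 1)^2 + 1/2 * real (m - 1)^2 * real m - 1/3 * real (m - 1)^3)" by (rule anti_AA)
  also have "... = (- 1 - 1/6 * real m + real m^2 + 1/6 * real m^3)" unfolding of_nat_diff[OF m] of_nat_1 by algebra
  finally show ?thesis .
qed

lemma conv_AA: assumes m: "2 \<le> m" shows "(\<Sum>j=1..m-1. al j * al (m-j)) = (- 1 - 1/6 * real m + real m^2 + 1/6 * real m^3)"
proof -
  have cs: "(\<Sum>j=1..m-1. al j * al (m-j)) = (\<Sum>j=1..m-1. PA (real j) * PA (real (m - j))) + (\<Sum>j=1..0. (al j - PA (real j)) * PA (real (m-j))) + (\<Sum>k=1..0. PA (real (m-k)) * (al k - PA (real k)))"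
    by (rule conv_split1[where p="\<lambda>j. PA (real j)" and q="\<lambda>j. PA (real j)"]) (use m in \<open>auto simp: thr_al thr_al\<close>)
  have mm: "1 \<le> m" using m by simp
  show ?thesis unfolding cs main_AA[OF mm] unfolding sumE0 vals of_nat_1 of_nat_numeral PA_def power_one
    by algebra
qed

lemma anti_AB: "(\<Sum>j=1..N. PA (real j) * PB (x - real j)) = (- 61/432 * real N - 305/432 * real N * x - 61/96 * real N * x^2 + 61/192 * real N^2 + 61/144 * real N^2 * x - 61/288 * real N^2 * x^2 - 61/864 * real N^3 + 61/216 * real N^3 * x - 61/576 * real N^4)"
proof (induction N)
  case 0 then show ?case by simp
next
  case (Suc N)
  have "(\<Sum>j=1..Suc N. PA (real j) * PB (x - real j)) = (- 61/432 * real N - 305/432 * real N * x - 61/96 * real N * x^2 + 61/192 * real N^2 + 61/144 * real N^2 * x - 61/288 * real N^2 * x^2 - 61/864 * real N^3 + 61/216 * real N^3 * x - 61/576 * real N^4) + PA (real (Suc N)) * PB (x - real (Suc N))"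
    by (simp only: sumSuc Suc.IH)
  also have "... = (- 61/432 * real (Suc N) - 305/432 * real (Suc N) * x - 61/96 * real (Suc N) * x^2 + 61/192 * real (Suc N)^2 + 61/144 * real (Suc N)^2 * x - 61/288 * real (Suc N)^2 * x^2 - 61/864 * real (Suc N)^3 + 61/216 * real (Suc N)^3 * x - 61/576 * real (Suc N)^4)" unfolding PA_def PB_def of_nat_Suc by algebra
  finally show ?case .
qed

lemma main_AB: assumes m: "1 \<le> m" shows "(\<Sum>j=1..m-1. PA (real j) * PB (real (m - j))) = (61/144 + 61/216 * real m - 671/1728 * real m^2 - 61/216 * real m^3 - 61/1728 * real m^4)"
proof -
  have "(\<Sum>j=1..m-1. PA (real j) * PB (real (m - j))) = (\<Sum>j=1..m-1. PA (real j) * PB (real m - real j))"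
    by (rule sum.cong) (auto simp: of_nat_diff)
  also have "... = (- 61/432 * real (m - 1) - 305/432 * real (m - 1) * real m - 61/96 * real (m - 1) * real m^2 + 61/192 * real (m - 1)^2 + 61/144 * real (m - 1)^2 * real m - 61/288 * real (m - 1)^2 * real m^2 - 61/864 * real (m - 1)^3 + 61/216 * real (m - 1)^3 * real m - 61/576 * real (m - 1)^4)" by (rule anti_AB)
  also have "... = (61/144 + 61/216 * real m - 671/1728 * real m^2 - 61/216 * real m^3 - 61/1728 * real m^4)" unfolding of_nat_diff[OF m] of_nat_1 by algebra
  finally show ?thesis .
qed

lemma conv_AB: assumes m: "4 \<le> m" shows "(\<Sum>j=1..m-1. al j * be (m-j)) = (13/36 + 17/432 * real m - 671/1728 * real m^2 - 61/216 * real m^3 - 61/1728 * real m^4)"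
proof -
  have cs: "(\<Sum>j=1..m-1. al j * be (m-j)) = (\<Sum>j=1..m-1. PA (real j) * PB (real (m - j))) + (\<Sum>j=1..0. (al j - PA (real j)) * PB (real (m-j))) + (\<Sum>k=1..2. PA (real (m-k)) * (be k - PB (real k)))"
    by (rule conv_split1[where p="\<lambda>j. PA (real j)" and q="\<lambda>j. PB (real j)"]) (use m in \<open>auto simp: thr_al thr_be\<close>)
  have mm: "1 \<le> m" using m by simp
  have d: "real (m - 1) = real m - 1" "real (m - 2) = real m - 2" using m by (simp_all add: of_nat_diff)
  show ?thesis unfolding cs main_AB[OF mm] unfolding sumE0 sumE2 d vals of_nat_1 of_nat_numeral PA_def PB_def power_one
    by algebra
qed

lemma anti_BA: "(\<Sum>j=1..N. PB (real j) * PA (x - real j)) = (- 61/108 * real N - 793/864 * real N * x + 61/576 * real N^2 - 61/96 * real N^2 * x + 305/864 * real N^3 - 61/432 * real N^3 * x + 61/576 * real N^4)"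
proof (induction N)
  case 0 then show ?case by simp
next
  case (Suc N)
  have "(\<Sum>j=1..Suc N. PB (real j) * PA (x - real j)) = (- 61/108 * real N - 793/864 * real N * x + 61/576 * real N^2 - 61/96 * real N^2 * x + 305/864 * real N^3 - 61/432 * real N^3 * x + 61/576 * real N^4) + PB (real (Suc N)) * PA (x - real (Suc N))"
    by (simp only: sumSuc Suc.IH)
  also have "... = (- 61/108 * real (Suc N) - 793/864 * real (Suc N) * x + 61/576 * real (Suc N)^2 - 61/96 * real (Suc N)^2 * x + 305/864 * real (Suc N)^3 - 61/432 * real (Suc N)^3 * x + 61/576 * real (Suc N)^4)" unfolding PA_def PB_def of_nat_Suc by algebra
  finally show ?case .
qed

lemma main_BA: assumes m: "1 \<le> m" shows "(\<Sum>j=1..m-1. PB (real j) * PA (real (m - j))) = (61/144 + 61/216 * real m - 671/1728 * real m^2 - 61/216 * real m^3 - 61/1728 * real m^4)"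
proof -
  have "(\<Sum>j=1..m-1. PB (real j) * PA (real (m - j))) = (\<Sum>j=1..m-1. PB (real j) * PA (real m - real j))"
    by (rule sum.cong) (auto simp: of_nat_diff)
  also have "... = (- 61/108 * real (m - 1) - 793/864 * real (m - 1) * real m + 61/576 * real (m - 1)^2 - 61/96 * real (m - 1)^2 * real m + 305/864 * real (m - 1)^3 - 61/432 * real (m - 1)^3 * real m + 61/576 * real (m - 1)^4)" by (rule anti_BA)
  also have "... = (61/144 + 61/216 * real m - 671/1728 * real m^2 - 61/216 * real m^3 - 61/1728 * real m^4)" unfolding of_nat_diff[OF m] of_nat_1 by algebra
  finally show ?thesis .
qed

lemma conv_BA: assumes m: "4 \<le> m" shows "(\<Sum>j=1..m-1. be j * al (m-j)) = (13/36 + 17/432 * real m - 671/1728 * real m^2 - 61/216 * real m^3 - 61/1728 * real m^4)"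
proof -
  have cs: "(\<Sum>j=1..m-1. be j * al (m-j)) = (\<Sum>j=1..m-1. PB (real j) * PA (real (m - j))) + (\<Sum>j=1..2. (be j - PB (real j)) * PA (real (m-j))) + (\<Sum>k=1..0. PB (real (m-k)) * (al k - PA (real k)))"
    by (rule conv_split1[where p="\<lambda>j. PB (real j)" and q="\<lambda>j. PA (real j)"]) (use m in \<open>auto simp: thr_be thr_al\<close>)
  have mm: "1 \<le> m" using m by simp
  have d: "real (m - 1) = real m - 1" "real (m - 2) = real m - 2" using m by (simp_all add: of_nat_diff)
  show ?thesis unfolding cs main_BA[OF mm] unfolding sumE0 sumE2 d vals of_nat_1 of_nat_numeral PA_def PB_def power_one
    by algebra
qed

lemma anti_AC: "(\<Sum>j=1..N. PA (real j) * PC (x - real j)) = (431347/6220800 * real N + 131093/311040 * real N * x + 542119/1036800 * real N * x^2 + 3721/27648 * real N * x^3 - 805163/4147200 * real N^2 - 1662709/4147200 * real N^2 * x - 71/2025 * real N^2 * x^2 + 3721/82944 * real N^2 * x^3 + 578471/6220800 * real N^3 - 546409/6220800 * real N^3 * x - 3721/41472 * real N^3 * x^2 + 206371/4147200 * real N^4 + 3721/55296 * real N^4 * x - 3721/207360 * real N^5)"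
proof (induction N)
  case 0 then show ?case by simp
next
  case (Suc N)
  have "(\<Sum>j=1..Suc N. PA (real j) * PC (x - real j)) = (431347/6220800 * real N + 131093/311040 * real N * x + 542119/1036800 * real N * x^2 + 3721/27648 * real N * x^3 - 805163/4147200 * real N^2 - 1662709/4147200 * real N^2 * x - 71/2025 * real N^2 * x^2 + 3721/82944 * real N^2 * x^3 + 578471/6220800 * real N^3 - 546409/6220800 * real N^3 * x - 3721/41472 * real N^3 * x^2 + 206371/4147200 * real N^4 + 3721/55296 * real N^4 * x - 3721/207360 * real N^5) + PA (real (Suc N)) * PC (x - real (Suc N))"
    by (simp only: sumSuc Suc.IH)
  also have "... = (431347/6220800 * real (Suc N) + 131093/311040 * real (Suc N) * x + 542119/1036800 * real (Suc N) * x^2 + 3721/27648 * real (Suc N) * x^3 - 805163/4147200 * real (Suc N)^2 - 1662709/4147200 * real (Suc N)^2 * x - 71/2025 * real (Suc N)^2 * x^2 + 3721/82944 * real (Suc N)^2 * x^3 + 578471/6220800 * real (Suc N)^3 - 546409/6220800 * real (Suc N)^3 * x - 3721/41472 * real (Suc N)^3 * x^2 + 206371/4147200 * real (Suc N)^4 + 3721/55296 * real (Suc N)^4 * x - 3721/207360 * real (Suc N)^5)" unfolding PA_def PC_def of_nat_Suc by algebra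
  finally show ?case .
qed

lemma main_AC: assumes m: "1 \<le> m" shows "(\<Sum>j=1..m-1. PA (real j) * PC (real (m - j))) = (- 74849/259200 - 1365029/6220800 * real m + 2828231/12441600 * real m^2 + 2674243/12441600 * real m^3 + 764521/12441600 * real m^4 + 3721/829440 * real m^5)"
proof -
  have "(\<Sum>j=1..m-1. PA (real j) * PC (real (m - j))) = (\<Sum>j=1..m-1. PA (real j) * PC (real m - real j))"
    by (rule sum.cong) (auto simp: of_nat_diff)
  also have "... = (431347/6220800 * real (m - 1) + 131093/311040 * real (m - 1) * real m + 542119/1036800 * real (m - 1) * real m^2 + 3721/27648 * real (m - 1) * real m^3 - 805163/4147200 * real (m - 1)^2 - 1662709/4147200 * real (m - 1)^2 * real m - 71/2025 * real (m - 1)^2 * real m^2 + 3721/82944 * real (m - 1)^2 * real m^3 + 578471/6220800 * real (m - 1)^3 - 546409/6220800 * real (m - 1)^3 * real m - 3721/41472 * real (m - 1)^3 * real m^2 + 206371/4147200 * real (m - 1)^4 + 3721/55296 * real (m - 1)^4 * real m - 3721/207360 * real (m - 1)^5)" by (rule anti_AC)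
  also have "... = (- 74849/259200 - 1365029/6220800 * real m + 2828231/12441600 * real m^2 + 2674243/12441600 * real m^3 + 764521/12441600 * real m^4 + 3721/829440 * real m^5)" unfolding of_nat_diff[OF m] of_nat_1 by algebra
  finally show ?thesis .
qed

lemma conv_AC: assumes m: "7 \<le> m" shows "(\<Sum>j=1..m-1. al j * ga (m-j)) = (- 6733/51840 + 338467/6220800 * real m + 2828231/12441600 * real m^2 + 2674243/12441600 * real m^3 + 764521/12441600 * real m^4 + 3721/829440 * real m^5)"
proof -
  have cs: "(\<Sum>j=1..m-1. al j * ga (m-j)) = (\<Sum>j=1..m-1. PA (real j) * PC (real (m - j))) + (\<Sum>j=1..0. (al j - PA (real j)) * PC (real (m-j))) + (\<Sum>k=1..5. PA (real (m-k)) * (ga k - PC (real k)))"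
    by (rule conv_split1[where p="\<lambda>j. PA (real j)" and q="\<lambda>j. PC (real j)"]) (use m in \<open>auto simp: thr_al thr_ga\<close>)
  have mm: "1 \<le> m" using m by simp
  have d: "real (m - 1) = real m - 1" "real (m - 2) = real m - 2" "real (m - 3) = real m - 3" "real (m - 4) = real m - 4" "real (m - 5) = real m - 5" using m by (simp_all add: of_nat_diff)
  show ?thesis unfolding cs main_AC[OF mm] unfolding sumE0 sumE5 d vals of_nat_1 of_nat_numeral PA_def PC_def power_one
    by algebra
qed

lemma anti_BB: "(\<Sum>j=1..N. PB (real j) * PB (x - real j)) = (70699/622080 * real N + 3721/7776 * real N * x + 48373/124416 * real N * x^2 - 3721/20736 * real N^2 - 3721/41472 * real N^2 * x + 3721/13824 * real N^2 * x^2 - 3721/62208 * real N^3 - 18605/62208 * real N^3 * x + 3721/62208 * real N^3 * x^2 + 3721/41472 * real N^4 - 3721/41472 * real N^4 * x + 3721/103680 * real N^5)"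
proof (induction N)
  case 0 then show ?case by simp
next
  case (Suc N)
  have "(\<Sum>j=1..Suc N. PB (real j) * PB (x - real j)) = (70699/622080 * real N + 3721/7776 * real N * x + 48373/124416 * real N * x^2 - 3721/20736 * real N^2 - 3721/41472 * real N^2 * x + 3721/13824 * real N^2 * x^2 - 3721/62208 * real N^3 - 18605/62208 * real N^3 * x + 3721/62208 * real N^3 * x^2 + 3721/41472 * real N^4 - 3721/41472 * real N^4 * x + 3721/103680 * real N^5) + PB (real (Suc N)) * PB (x - real (Suc N))"
    by (simp only: sumSuc Suc.IH)
  also have "... = (70699/622080 * real (Suc N) + 3721/7776 * real (Suc N) * x + 48373/124416 * real (Suc N) * x^2 - 3721/20736 * real (Suc N)^2 - 3721/41472 * real (Suc N)^2 * x + 3721/13824 * real (Suc N)^2 * x^2 - 3721/62208 * real (Suc N)^3 - 18605/62208 * real (Suc N)^3 * x + 3721/62208 * real (Suc N)^3 * x^2 + 3721/41472 * real (Suc N)^4 - 3721/41472 * real (Suc N)^4 * x + 3721/103680 * real (Suc N)^5)" unfolding PB_def of_nat_Suc by algebra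
  finally show ?case .
qed

lemma main_BB: assumes m: "1 \<le> m" shows "(\<Sum>j=1..m-1. PB (real j) * PB (real (m - j))) = (- 3721/20736 - 152561/622080 * real m + 3721/31104 * real m^2 + 3721/15552 * real m^3 + 3721/62208 * real m^4 + 3721/622080 * real m^5)"
proof -
  have "(\<Sum>j=1..m-1. PB (real j) * PB (real (m - j))) = (\<Sum>j=1..m-1. PB (real j) * PB (real m - real j))"
    by (rule sum.cong) (auto simp: of_nat_diff)
  also have "... = (70699/622080 * real (m - 1) + 3721/7776 * real (m - 1) * real m + 48373/124416 * real (m - 1) * real m^2 - 3721/20736 * real (m - 1)^2 - 3721/41472 * real (m - 1)^2 * real m + 3721/13824 * real (m - 1)^2 * real m^2 - 3721/62208 * real (m - 1)^3 - 18605/62208 * real (m - 1)^3 * real m + 3721/62208 * real (m - 1)^3 * real m^2 + 3721/41472 * real (m - 1)^4 - 3721/41472 * real (m - 1)^4 * real m + 3721/103680 * real (m - 1)^5)" by (rule anti_BB)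
  also have "... = (- 3721/20736 - 152561/622080 * real m + 3721/31104 * real m^2 + 3721/15552 * real m^3 + 3721/62208 * real m^4 + 3721/622080 * real m^5)" unfolding of_nat_diff[OF m] of_nat_1 by algebra
  finally show ?thesis .
qed

lemma conv_BB: assumes m: "6 \<le> m" shows "(\<Sum>j=1..m-1. be j * be (m-j)) = (- 4819/20736 - 86681/622080 * real m + 5063/15552 * real m^2 + 3721/15552 * real m^3 + 3721/62208 * real m^4 + 3721/622080 * real m^5)"
proof -
  have cs: "(\<Sum>j=1..m-1. be j * be (m-j)) = (\<Sum>j=1..m-1. PB (real j) * PB (real (m - j))) + (\<Sum>j=1..2. (be j - PB (real j)) * PB (real (m-j))) + (\<Sum>k=1..2. PB (real (m-k)) * (be k - PB (real k)))"
    by (rule conv_split1[where p="\<lambda>j. PB (real j)" and q="\<lambda>j. PB (real j)"]) (use m in \<open>auto simp: thr_be thr_be\<close>)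
  have mm: "1 \<le> m" using m by simp
  have d: "real (m - 1) = real m - 1" "real (m - 2) = real m - 2" using m by (simp_all add: of_nat_diff)
  show ?thesis unfolding cs main_BB[OF mm] unfolding sumE2 d vals of_nat_1 of_nat_numeral PB_def power_one
    by algebra
qed

lemma anti_CA: "(\<Sum>j=1..N. PC (real j) * PA (x - real j)) = (2785873/6220800 * real N + 4357273/6220800 * real N * x - 20321/4147200 * real N^2 + 2447551/4147200 * real N^2 * x - 355211/1244160 * real N^3 + 1249967/6220800 * real N^3 * x - 578471/4147200 * real N^4 + 3721/165888 * real N^4 * x - 3721/207360 * real N^5)"
proof (induction N)
  case 0 then show ?case by simp
next
  case (Suc N)
  have "(\<Sum>j=1..Suc N. PC (real j) * PA (x - real j)) = (2785873/6220800 * real N + 4357273/6220800 * real N * x - 20321/4147200 * real N^2 + 2447551/4147200 * real N^2 * x - 355211/1244160 * real N^3 + 1249967/6220800 * real N^3 * x - 578471/4147200 * real N^4 + 3721/165888 * real N^4 * x - 3721/207360 * real N^5) + PC (real (Suc N)) * PA (x - real (Suc N))"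
    by (simp only: sumSuc Suc.IH)
  also have "... = (2785873/6220800 * real (Suc N) + 4357273/6220800 * real (Suc N) * x - 20321/4147200 * real (Suc N)^2 + 2447551/4147200 * real (Suc N)^2 * x - 355211/1244160 * real (Suc N)^3 + 1249967/6220800 * real (Suc N)^3 * x - 578471/4147200 * real (Suc N)^4 + 3721/165888 * real (Suc N)^4 * x - 3721/207360 * real (Suc N)^5)" unfolding PA_def PC_def of_nat_Suc by algebra
  finally show ?case .
qed

lemma main_CA: assumes m: "1 \<le> m" shows "(\<Sum>j=1..m-1. PC (real j) * PA (real (m - j))) = (- 74849/259200 - 1365029/6220800 * real m + 2828231/12441600 * real m^2 + 2674243/12441600 * real m^3 + 764521/12441600 * real m^4 + 3721/829440 * real m^5)"
proof -
  have "(\<Sum>j=1..m-1. PC (real j) * PA (real (m - j))) = (\<Sum>j=1..m-1. PC (real j) * PA (real m - real j))"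
    by (rule sum.cong) (auto simp: of_nat_diff)
  also have "... = (2785873/6220800 * real (m - 1) + 4357273/6220800 * real (m - 1) * real m - 20321/4147200 * real (m - 1)^2 + 2447551/4147200 * real (m - 1)^2 * real m - 355211/1244160 * real (m - 1)^3 + 1249967/6220800 * real (m - 1)^3 * real m - 578471/4147200 * real (m - 1)^4 + 3721/165888 * real (m - 1)^4 * real m - 3721/207360 * real (m - 1)^5)" by (rule anti_CA)
  also have "... = (- 74849/259200 - 1365029/6220800 * real m + 2828231/12441600 * real m^2 + 2674243/12441600 * real m^3 + 764521/12441600 * real m^4 + 3721/829440 * real m^5)" unfolding of_nat_diff[OF m] of_nat_1 by algebra
  finally show ?thesis .
qed

lemma conv_CA: assumes m: "7 \<le> m" shows "(\<Sum>j=1..m-1. ga j * al (m-j)) = (- 6733/51840 + 338467/6220800 * real m + 2828231/12441600 * real m^2 + 2674243/12441600 * real m^3 + 764521/12441600 * real m^4 + 3721/829440 * real m^5)"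
proof -
  have cs: "(\<Sum>j=1..m-1. ga j * al (m-j)) = (\<Sum>j=1..m-1. PC (real j) * PA (real (m - j))) + (\<Sum>j=1..5. (ga j - PC (real j)) * PA (real (m-j))) + (\<Sum>k=1..0. PC (real (m-k)) * (al k - PA (real k)))"
    by (rule conv_split1[where p="\<lambda>j. PC (real j)" and q="\<lambda>j. PA (real j)"]) (use m in \<open>auto simp: thr_ga thr_al\<close>)
  have mm: "1 \<le> m" using m by simp
  have d: "real (m - 1) = real m - 1" "real (m - 2) = real m - 2" "real (m - 3) = real m - 3" "real (m - 4) = real m - 4" "real (m - 5) = real m - 5" using m by (simp_all add: of_nat_diff)
  show ?thesis unfolding cs main_CA[OF mm] unfolding sumE0 sumE5 d vals of_nat_1 of_nat_numeral PA_def PC_def power_one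
    by algebra
qed

lemma om0_vals: "om0 1 = 0" "om0 2 = 4" "om0 3 = 12" "om0 4 = 25" "om0 5 = 44" "om0 6 = 70" "om0 7 = 104" "om0 (Suc 0) = 0"
  by (simp_all add: om0_def sumE1 sumE2 sumE3 sumE4 sumE5 sumE6 sumS al_def be_def ga_def PA_def PB_def PC_def)

lemma om2_vals: "om2 1 = 0" "om2 2 = - 8" "om2 3 = - 27" "om2 4 = - 1181/18" "om2 5 = - 4789/36" "om2 6 = - 17299/72" "om2 7 = - 14401/36" "om2 (Suc 0) = 0"
  by (simp_all add: om2_def sumE1 sumE2 sumE3 sumE4 sumE5 sumE6 sumS al_def be_def ga_def PA_def PB_def PC_def)

lemma om4_vals: "om4 1 = 0" "om4 2 = 12" "om4 3 = 171/4" "om4 4 = 151387/1296" "om4 5 = 1365613/5184" "om4 6 = 45362177/86400" "om4 7 = 13781741/14400" "om4 (Suc 0) = 0"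
  by (simp_all add: om4_def sumE1 sumE2 sumE3 sumE4 sumE5 sumE6 sumS al_def be_def ga_def PA_def PB_def PC_def)

lemmas vals2 = abc_vals om0_vals om2_vals om4_vals

lemma om0_poly: assumes m: "2 \<le> m" shows "om0 m = Q0 (real m)"
  unfolding om0_def Q0_def by (rule conv_AA[OF m])
lemma om2_poly: assumes m: "4 \<le> m" shows "om2 m = Q2 (real m)"
  unfolding om2_def sum.distrib conv_AB[OF m] conv_BA[OF m] Q2_def by algebra
lemma om4_poly: assumes m: "7 \<le> m" shows "om4 m = Q4 (real m)"
proof -
  have m6: "6 \<le> m" using m by simp
  show ?thesis unfolding om4_def sum.distrib conv_AC[OF m] conv_BB[OF m6] conv_CA[OF m] Q4_def by algebra
qed
lemma thr_om0: "1 < j \<Longrightarrow> om0 j = Q0 (real j)" by (rule om0_poly) simp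
lemma thr_om2: "3 < j \<Longrightarrow> om2 j = Q2 (real j)" by (rule om2_poly) simp
lemma thr_om4: "6 < j \<Longrightarrow> om4 j = Q4 (real j)" by (rule om4_poly) simp

lemma anti_AO0: "(\<Sum>j=1..N. PA (real j) * Q0 (x - real j)) = (- 73/60 * real N - 3/2 * real N * x + 7/6 * real N * x^2 + 1/4 * real N * x^3 + 3/8 * real N^2 - 41/24 * real N^2 * x + 1/12 * real N^2 * x^3 + 3/4 * real N^3 - 1/4 * real N^3 * x - 1/6 * real N^3 * x^2 + 1/8 * real N^4 + 1/8 * real N^4 * x - 1/30 * real N^5)"
proof (induction N)
  case 0 then show ?case by simp
next
  case (Suc N)
  have "(\<Sum>j=1..Suc N. PA (real j) * Q0 (x - real j)) = (- 73/60 * real N - 3/2 * real N * x + 7/6 * real N * x^2 + 1/4 * real N * x^3 + 3/8 * real N^2 - 41/24 * real N^2 * x + 1/12 * real N^2 * x^3 + 3/4 * real N^3 - 1/4 * real N^3 * x - 1/6 * real N^3 * x^2 + 1/8 * real N^4 + 1/8 * real N^4 * x - 1/30 * real N^5) + PA (real (Suc N)) * Q0 (x - real (Suc N))"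
    by (simp only: sumSuc Suc.IH)
  also have "... = (- 73/60 * real (Suc N) - 3/2 * real (Suc N) * x + 7/6 * real (Suc N) * x^2 + 1/4 * real (Suc N) * x^3 + 3/8 * real (Suc N)^2 - 41/24 * real (Suc N)^2 * x + 1/12 * real (Suc N)^2 * x^3 + 3/4 * real (Suc N)^3 - 1/4 * real (Suc N)^3 * x - 1/6 * real (Suc N)^3 * x^2 + 1/8 * real (Suc N)^4 + 1/8 * real (Suc N)^4 * x - 1/30 * real (Suc N)^5)" unfolding PA_def Q0_def of_nat_Suc by algebra
  finally show ?case .
qed

lemma main_AO0: assumes m: "1 \<le> m" shows "(\<Sum>j=1..m-1. PA (real j) * Q0 (real (m - j))) = (1 - 13/60 * real m - 9/8 * real m^2 + 5/24 * real m^3 + 1/8 * real m^4 + 1/120 * real m^5)"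
proof -
  have "(\<Sum>j=1..m-1. PA (real j) * Q0 (real (m - j))) = (\<Sum>j=1..m-1. PA (real j) * Q0 (real m - real j))"
    by (rule sum.cong) (auto simp: of_nat_diff)
  also have "... = (- 73/60 * real (m - 1) - 3/2 * real (m - 1) * real m + 7/6 * real (m - 1) * real m^2 + 1/4 * real (m - 1) * real m^3 + 3/8 * real (m - 1)^2 - 41/24 * real (m - 1)^2 * real m + 1/12 * real (m - 1)^2 * real m^3 + 3/4 * real (m - 1)^3 - 1/4 * real (m - 1)^3 * real m - 1/6 * real (m - 1)^3 * real m^2 + 1/8 * real (m - 1)^4 + 1/8 * real (m - 1)^4 * real m - 1/30 * real (m - 1)^5)" by (rule anti_AO0)
  also have "... = (1 - 13/60 * real m - 9/8 * real m^2 + 5/24 * real m^3 + 1/8 * real m^4 + 1/120 * real m^5)" unfolding of_nat_diff[OF m] of_nat_1 by algebra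
  finally show ?thesis .
qed

lemma conv_AO0: assumes m: "3 \<le> m" shows "(\<Sum>j=1..m-1. al j * om0 (m-j)) = (1 - 13/60 * real m - 9/8 * real m^2 + 5/24 * real m^3 + 1/8 * real m^4 + 1/120 * real m^5)"
proof -
  have cs: "(\<Sum>j=1..m-1. al j * om0 (m-j)) = (\<Sum>j=1..m-1. PA (real j) * Q0 (real (m - j))) + (\<Sum>j=1..0. (al j - PA (real j)) * Q0 (real (m-j))) + (\<Sum>k=1..1. PA (real (m-k)) * (om0 k - Q0 (real k)))"
    by (rule conv_split1[where p="\<lambda>j. PA (real j)" and q="\<lambda>j. Q0 (real j)"]) (use m in \<open>auto simp: thr_al thr_om0\<close>)
  have mm: "1 \<le> m" using m by simp
  have d: "real (m - 1) = real m - 1" using m by (simp_all add: of_nat_diff)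
  show ?thesis unfolding cs main_AO0[OF mm] unfolding sumE0 sumE1 d vals2 of_nat_1 of_nat_numeral PA_def Q0_def power_one
    by algebra
qed

lemma anti_AO2: "(\<Sum>j=1..N. PA (real j) * Q2 (x - real j)) = (3823/4320 * real N + 349/405 * real N * x - 61/576 * real N * x^2 - 427/648 * real N * x^3 - 61/576 * real N * x^4 - 793/5184 * real N^2 + 113/288 * real N^2 * x + 427/432 * real N^2 * x^2 - 61/1728 * real N^2 * x^4 - 391/1728 * real N^3 - 427/648 * real N^3 * x + 61/288 * real N^3 * x^2 + 61/648 * real N^3 * x^3 + 427/2592 * real N^4 - 61/288 * real N^4 * x - 61/576 * real N^4 * x^2 + 61/960 * real N^5 + 61/1080 * real N^5 * x - 61/5184 * real N^6)"
proof (induction N)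
  case 0 then show ?case by simp
next
  case (Suc N)
  have "(\<Sum>j=1..Suc N. PA (real j) * Q2 (x - real j)) = (3823/4320 * real N + 349/405 * real N * x - 61/576 * real N * x^2 - 427/648 * real N * x^3 - 61/576 * real N * x^4 - 793/5184 * real N^2 + 113/288 * real N^2 * x + 427/432 * real N^2 * x^2 - 61/1728 * real N^2 * x^4 - 391/1728 * real N^3 - 427/648 * real N^3 * x + 61/288 * real N^3 * x^2 + 61/648 * real N^3 * x^3 + 427/2592 * real N^4 - 61/288 * real N^4 * x - 61/576 * real N^4 * x^2 + 61/960 * real N^5 + 61/1080 * real N^5 * x - 61/5184 * real N^6) + PA (real (Suc N)) * Q2 (x - real (Suc N))"
    by (simp only: sumSuc Suc.IH)
  also have "... = (3823/4320 * real (Suc N) + 349/405 * real (Suc N) * x - 61/576 * real (Suc N) * x^2 - 427/648 * real (Suc N) * x^3 - 61/576 * real (Suc N) * x^4 - 793/5184 * real (Suc N)^2 + 113/288 * real (Suc N)^2 * x + 427/432 * real (Suc N)^2 * x^2 - 61/1728 * real (Suc N)^2 * x^4 - 391/1728 * real (Suc N)^3 - 427/648 * real (Suc N)^3 * x + 61/288 * real (Suc N)^3 * x^2 + 61/648 * real (Suc N)^3 * x^3 + 427/2592 * real (Suc N)^4 - 61/288 * real (Suc N)^4 * x - 61/576 * real (Suc N)^4 * x^2 + 61/960 * real (Suc N)^5 + 61/1080 * real (Suc N)^5 * x - 61/5184 * real (Suc N)^6)" unfolding PA_def Q2_def of_nat_Suc by algebra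
  finally show ?case .
qed

lemma main_AO2: assumes m: "1 \<le> m" shows "(\<Sum>j=1..m-1. PA (real j) * Q2 (real (m - j))) = (- 13/18 + 703/4320 * real m + 18371/25920 * real m^2 + 13/216 * real m^3 - 427/2592 * real m^4 - 61/1440 * real m^5 - 61/25920 * real m^6)"
proof -
  have "(\<Sum>j=1..m-1. PA (real j) * Q2 (real (m - j))) = (\<Sum>j=1..m-1. PA (real j) * Q2 (real m - real j))"
    by (rule sum.cong) (auto simp: of_nat_diff)
  also have "... = (3823/4320 * real (m - 1) + 349/405 * real (m - 1) * real m - 61/576 * real (m - 1) * real m^2 - 427/648 * real (m - 1) * real m^3 - 61/576 * real (m - 1) * real m^4 - 793/5184 * real (m - 1)^2 + 113/288 * real (m - 1)^2 * real m + 427/432 * real (m - 1)^2 * real m^2 - 61/1728 * real (m - 1)^2 * real m^4 - 391/1728 * real (m - 1)^3 - 427/648 * real (m - 1)^3 * real m + 61/288 * real (m - 1)^3 * real m^2 + 61/648 * real (m - 1)^3 * real m^3 + 427/2592 * real (m - 1)^4 - 61/288 * real (m - 1)^4 * real m - 61/576 * real (m - 1)^4 * real m^2 + 61/960 * real (m - 1)^5 + 61/1080 * real (m - 1)^5 * real m - 61/5184 * real (m - 1)^6)" by (rule anti_AO2)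
  also have "... = (- 13/18 + 703/4320 * real m + 18371/25920 * real m^2 + 13/216 * real m^3 - 427/2592 * real m^4 - 61/1440 * real m^5 - 61/25920 * real m^6)" unfolding of_nat_diff[OF m] of_nat_1 by algebra
  finally show ?thesis .
qed

lemma conv_AO2: assumes m: "5 \<le> m" shows "(\<Sum>j=1..m-1. al j * om2 (m-j)) = (- 43/72 + 2803/4320 * real m + 18371/25920 * real m^2 + 13/216 * real m^3 - 427/2592 * real m^4 - 61/1440 * real m^5 - 61/25920 * real m^6)"
proof -
  have cs: "(\<Sum>j=1..m-1. al j * om2 (m-j)) = (\<Sum>j=1..m-1. PA (real j) * Q2 (real (m - j))) + (\<Sum>j=1..0. (al j - PA (real j)) * Q2 (real (m-j))) + (\<Sum>k=1..3. PA (real (m-k)) * (om2 k - Q2 (real k)))"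
    by (rule conv_split1[where p="\<lambda>j. PA (real j)" and q="\<lambda>j. Q2 (real j)"]) (use m in \<open>auto simp: thr_al thr_om2\<close>)
  have mm: "1 \<le> m" using m by simp
  have d: "real (m - 1) = real m - 1" "real (m - 2) = real m - 2" "real (m - 3) = real m - 3" using m by (simp_all add: of_nat_diff)
  show ?thesis unfolding cs main_AO2[OF mm] unfolding sumE0 sumE3 d vals2 of_nat_1 of_nat_numeral PA_def Q2_def power_one
    by algebra
qed

lemma anti_AO4: "(\<Sum>j=1..N. PA (real j) * Q4 (x - real j)) = (- 124540091/217728000 * real N - 8510041/11664000 * real N * x + 734939/37324800 * real N * x^2 + 20208101/37324800 * real N * x^3 + 8369089/37324800 * real N * x^4 + 3721/165888 * real N * x^5 + 7029073/37324800 * real N^2 - 604213/2332800 * real N^2 * x - 10357963/12441600 * real N^2 * x^2 - 70699/248832 * real N^2 * x^3 + 206371/12441600 * real N^2 * x^4 + 3721/497664 * real N^2 * x^5 + 2066653/12441600 * real N^3 + 21223751/37324800 * real N^3 * x + 2235761/18662400 * real N^3 * x^2 - 2220859/18662400 * real N^3 * x^3 - 18605/746496 * real N^3 * x^4 - 2716447/18662400 * real N^4 + 830903/37324800 * real N^4 * x + 27979/172800 * real N^4 * x^2 + 18605/497664 * real N^4 * x^3 - 433063/20736000 * real N^5 - 5837093/62208000 * real N^5 * x - 3721/124416 * real N^5 * x^2 + 764521/37324800 * real N^6 + 18605/1492992 * real N^6 * x - 3721/1741824 * real N^7)"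
proof (induction N)
  case 0 then show ?case by simp
next
  case (Suc N)
  have "(\<Sum>j=1..Suc N. PA (real j) * Q4 (x - real j)) = (- 124540091/217728000 * real N - 8510041/11664000 * real N * x + 734939/37324800 * real N * x^2 + 20208101/37324800 * real N * x^3 + 8369089/37324800 * real N * x^4 + 3721/165888 * real N * x^5 + 7029073/37324800 * real N^2 - 604213/2332800 * real N^2 * x - 10357963/12441600 * real N^2 * x^2 - 70699/248832 * real N^2 * x^3 + 206371/12441600 * real N^2 * x^4 + 3721/497664 * real N^2 * x^5 + 2066653/12441600 * real N^3 + 21223751/37324800 * real N^3 * x + 2235761/18662400 * real N^3 * x^2 - 2220859/18662400 * real N^3 * x^3 - 18605/746496 * real N^3 * x^4 - 2716447/18662400 * real N^4 + 830903/37324800 * real N^4 * x + 27979/172800 * real N^4 * x^2 + 18605/497664 * real N^4 * x^3 - 433063/20736000 * real N^5 - 5837093/62208000 * real N^5 * x - 3721/124416 * real N^5 * x^2 + 764521/37324800 * real N^6 + 18605/1492992 * real N^6 * x - 3721/1741824 * real N^7) + PA (real (Suc N)) * Q4 (x - real (Suc N))"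
    by (simp only: sumSuc Suc.IH)
  also have "... = (- 124540091/217728000 * real (Suc N) - 8510041/11664000 * real (Suc N) * x + 734939/37324800 * real (Suc N) * x^2 + 20208101/37324800 * real (Suc N) * x^3 + 8369089/37324800 * real (Suc N) * x^4 + 3721/165888 * real (Suc N) * x^5 + 7029073/37324800 * real (Suc N)^2 - 604213/2332800 * real (Suc N)^2 * x - 10357963/12441600 * real (Suc N)^2 * x^2 - 70699/248832 * real (Suc N)^2 * x^3 + 206371/12441600 * real (Suc N)^2 * x^4 + 3721/497664 * real (Suc N)^2 * x^5 + 2066653/12441600 * real (Suc N)^3 + 21223751/37324800 * real (Suc N)^3 * x + 2235761/18662400 * real (Suc N)^3 * x^2 - 2220859/18662400 * real (Suc N)^3 * x^3 - 18605/746496 * real (Suc N)^3 * x^4 - 2716447/18662400 * real (Suc N)^4 + 830903/37324800 * real (Suc N)^4 * x + 27979/172800 * real (Suc N)^4 * x^2 + 18605/497664 * real (Suc N)^4 * x^3 - 433063/20736000 * real (Suc N)^5 - 5837093/62208000 * real (Suc N)^5 * x - 3721/124416 * real (Suc N)^5 * x^2 + 764521/37324800 * real (Suc N)^6 + 18605/1492992 * real (Suc N)^6 * x - 3721/1741824 * real (Suc N)^7)" unfolding PA_def Q4_def of_nat_Suc by algebra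
  finally show ?case .
qed

lemma main_AO4: assumes m: "1 \<le> m" shows "(\<Sum>j=1..m-1. PA (real j) * Q4 (real (m - j))) = (17009/34560 - 17383391/217728000 * real m - 101015291/186624000 * real m^2 - 273251/3732480 * real m^3 + 4925069/37324800 * real m^4 + 11435753/186624000 * real m^5 + 800873/93312000 * real m^6 + 3721/10450944 * real m^7)"
proof -
  have "(\<Sum>j=1..m-1. PA (real j) * Q4 (real (m - j))) = (\<Sum>j=1..m-1. PA (real j) * Q4 (real m - real j))"
    by (rule sum.cong) (auto simp: of_nat_diff)
  also have "... = (- 124540091/217728000 * real (m - 1) - 8510041/11664000 * real (m - 1) * real m + 734939/37324800 * real (m - 1) * real m^2 + 20208101/37324800 * real (m - 1) * real m^3 + 8369089/37324800 * real (m - 1) * real m^4 + 3721/165888 * real (m - 1) * real m^5 + 7029073/37324800 * real (m - 1)^2 - 604213/2332800 * real (m - 1)^2 * real m - 10357963/12441600 * real (m - 1)^2 * real m^2 - 70699/248832 * real (m - 1)^2 * real m^3 + 206371/12441600 * real (m - 1)^2 * real m^4 + 3721/497664 * real (m - 1)^2 * real m^5 + 2066653/12441600 * real (m - 1)^3 + 21223751/37324800 * real (m - 1)^3 * real m + 2235761/18662400 * real (m - 1)^3 * real m^2 - 2220859/18662400 * real (m - 1)^3 * real m^3 - 18605/746496 * real (m - 1)^3 * real m^4 - 2716447/18662400 * real (m - 1)^4 + 830903/37324800 * real (m - 1)^4 * real m + 27979/172800 * real (m - 1)^4 * real m^2 + 18605/497664 * real (m - 1)^4 * real m^3 - 433063/20736000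 * real (m - 1)^5 - 5837093/62208000 * real (m - 1)^5 * real m - 3721/124416 * real (m - 1)^5 * real m^2 + 764521/37324800 * real (m - 1)^6 + 18605/1492992 * real (m - 1)^6 * real m - 3721/1741824 * real (m - 1)^7)" by (rule anti_AO4)
  also have "... = (17009/34560 - 17383391/217728000 * real m - 101015291/186624000 * real m^2 - 273251/3732480 * real m^3 + 4925069/37324800 * real m^4 + 11435753/186624000 * real m^5 + 800873/93312000 * real m^6 + 3721/10450944 * real m^7)" unfolding of_nat_diff[OF m] of_nat_1 by algebra
  finally show ?thesis .
qed

lemma conv_AO4: assumes m: "8 \<le> m" shows "(\<Sum>j=1..m-1. al j * om4 (m-j)) = (2401/21600 - 149778731/217728000 * real m - 101015291/186624000 * real m^2 - 273251/3732480 * real m^3 + 4925069/37324800 * real m^4 + 11435753/186624000 * real m^5 + 800873/93312000 * real m^6 + 3721/10450944 * real m^7)"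
proof -
  have cs: "(\<Sum>j=1..m-1. al j * om4 (m-j)) = (\<Sum>j=1..m-1. PA (real j) * Q4 (real (m - j))) + (\<Sum>j=1..0. (al j - PA (real j)) * Q4 (real (m-j))) + (\<Sum>k=1..6. PA (real (m-k)) * (om4 k - Q4 (real k)))"
    by (rule conv_split1[where p="\<lambda>j. PA (real j)" and q="\<lambda>j. Q4 (real j)"]) (use m in \<open>auto simp: thr_al thr_om4\<close>)
  have mm: "1 \<le> m" using m by simp
  have d: "real (m - 1) = real m - 1" "real (m - 2) = real m - 2" "real (m - 3) = real m - 3" "real (m - 4) = real m - 4" "real (m - 5) = real m - 5" "real (m - 6) = real m - 6" using m by (simp_all add: of_nat_diff)
  show ?thesis unfolding cs main_AO4[OF mm] unfolding sumE0 sumE6 d vals2 of_nat_1 of_nat_numeral PA_def Q4_def power_one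
    by algebra
qed

lemma anti_BO0: "(\<Sum>j=1..N. PB (real j) * Q0 (x - real j)) = (6893/8640 * real N + 21533/25920 * real N * x - 427/576 * real N * x^2 - 793/5184 * real N * x^3 + 1037/10368 * real N^2 + 793/576 * real N^2 * x - 305/1152 * real N^2 * x^2 - 61/576 * real N^2 * x^3 - 61/108 * real N^3 + 427/648 * real N^3 * x + 61/576 * real N^3 * x^2 - 61/2592 * real N^3 * x^3 - 3355/10368 * real N^4 + 61/1152 * real N^4 * x^2 - 61/2880 * real N^5 - 61/1440 * real N^5 * x + 61/5184 * real N^6)"
proof (induction N)
  case 0 then show ?case by simp
next
  case (Suc N)
  have "(\<Sum>j=1..Suc N. PB (real j) * Q0 (x - real j)) = (6893/8640 * real N + 21533/25920 * real N * x - 427/576 * real N * x^2 - 793/5184 * real N * x^3 + 1037/10368 * real N^2 + 793/576 * real N^2 * x - 305/1152 * real N^2 * x^2 - 61/576 * real N^2 * x^3 - 61/108 * real N^3 + 427/648 * real N^3 * x + 61/576 * real N^3 * x^2 - 61/2592 * real N^3 * x^3 - 3355/10368 * real N^4 + 61/1152 * real N^4 * x^2 - 61/2880 * real N^5 - 61/1440 * real N^5 * x + 61/5184 * real N^6) + PB (real (Suc N)) * Q0 (x - real (Suc N))"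
    by (simp only: sumSuc Suc.IH)
  also have "... = (6893/8640 * real (Suc N) + 21533/25920 * real (Suc N) * x - 427/576 * real (Suc N) * x^2 - 793/5184 * real (Suc N) * x^3 + 1037/10368 * real (Suc N)^2 + 793/576 * real (Suc N)^2 * x - 305/1152 * real (Suc N)^2 * x^2 - 61/576 * real (Suc N)^2 * x^3 - 61/108 * real (Suc N)^3 + 427/648 * real (Suc N)^3 * x + 61/576 * real (Suc N)^3 * x^2 - 61/2592 * real (Suc N)^3 * x^3 - 3355/10368 * real (Suc N)^4 + 61/1152 * real (Suc N)^4 * x^2 - 61/2880 * real (Suc N)^5 - 61/1440 * real (Suc N)^5 * x + 61/5184 * real (Suc N)^6)" unfolding PB_def Q0_def of_nat_Suc by algebra
  finally show ?case .
qed

lemma main_BO0: assumes m: "1 \<le> m" shows "(\<Sum>j=1..m-1. PB (real j) * Q0 (real (m - j))) = (- 61/144 - 427/8640 * real m + 26291/51840 * real m^2 + 61/864 * real m^3 - 427/5184 * real m^4 - 61/2880 * real m^5 - 61/51840 * real m^6)"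
proof -
  have "(\<Sum>j=1..m-1. PB (real j) * Q0 (real (m - j))) = (\<Sum>j=1..m-1. PB (real j) * Q0 (real m - real j))"
    by (rule sum.cong) (auto simp: of_nat_diff)
  also have "... = (6893/8640 * real (m - 1) + 21533/25920 * real (m - 1) * real m - 427/576 * real (m - 1) * real m^2 - 793/5184 * real (m - 1) * real m^3 + 1037/10368 * real (m - 1)^2 + 793/576 * real (m - 1)^2 * real m - 305/1152 * real (m - 1)^2 * real m^2 - 61/576 * real (m - 1)^2 * real m^3 - 61/108 * real (m - 1)^3 + 427/648 * real (m - 1)^3 * real m + 61/576 * real (m - 1)^3 * real m^2 - 61/2592 * real (m - 1)^3 * real m^3 - 3355/10368 * real (m - 1)^4 + 61/1152 * real (m - 1)^4 * real m^2 - 61/2880 * real (m - 1)^5 - 61/1440 * real (m - 1)^5 * real m + 61/5184 * real (m - 1)^6)" by (rule anti_BO0)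
  also have "... = (- 61/144 - 427/8640 * real m + 26291/51840 * real m^2 + 61/864 * real m^3 - 427/5184 * real m^4 - 61/2880 * real m^5 - 61/51840 * real m^6)" unfolding of_nat_diff[OF m] of_nat_1 by algebra
  finally show ?thesis .
qed

lemma conv_BO0: assumes m: "5 \<le> m" shows "(\<Sum>j=1..m-1. be j * om0 (m-j)) = (- 43/144 + 2803/8640 * real m + 18371/51840 * real m^2 + 13/432 * real m^3 - 427/5184 * real m^4 - 61/2880 * real m^5 - 61/51840 * real m^6)"
proof -
  have cs: "(\<Sum>j=1..m-1. be j * om0 (m-j)) = (\<Sum>j=1..m-1. PB (real j) * Q0 (real (m - j))) + (\<Sum>j=1..2. (be j - PB (real j)) * Q0 (real (m-j))) + (\<Sum>k=1..1. PB (real (m-k)) * (om0 k - Q0 (real k)))"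
    by (rule conv_split1[where p="\<lambda>j. PB (real j)" and q="\<lambda>j. Q0 (real j)"]) (use m in \<open>auto simp: thr_be thr_om0\<close>)
  have mm: "1 \<le> m" using m by simp
  have d: "real (m - 1) = real m - 1" "real (m - 2) = real m - 2" using m by (simp_all add: of_nat_diff)
  show ?thesis unfolding cs main_BO0[OF mm] unfolding sumE1 sumE2 d vals2 of_nat_1 of_nat_numeral PB_def Q0_def power_one
    by algebra
qed

lemma anti_BO2: "(\<Sum>j=1..N. PB (real j) * Q2 (x - real j)) = (- 2506307/4354560 * real N - 107177/207360 * real N * x + 517219/3732480 * real N * x^2 + 26047/62208 * real N * x^3 + 48373/746496 * real N * x^4 - 28975/248832 * real N^2 - 375943/746496 * real N^2 * x - 48373/82944 * real N^2 * x^2 + 18605/124416 * real N^2 * x^3 + 3721/82944 * real N^2 * x^4 + 17507/82944 * real N^3 + 427/1536 * real N^3 * x - 160003/373248 * real N^3 * x^2 - 3721/62208 * real N^3 * x^3 + 3721/373248 * real N^3 * x^4 - 671/31104 * real N^4 + 264191/746496 * real N^4 * x - 3721/124416 * real N^4 * x^3 - 40931/414720 * real N^5 + 3721/103680 * real N^5 * x + 3721/103680 * real N^5 * x^2 - 3721/248832 * real N^6 - 3721/186624 * real N^6 * x + 3721/870912 * real N^7)"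
proof (induction N)
  case 0 then show ?case by simp
next
  case (Suc N)
  have "(\<Sum>j=1..Suc N. PB (real j) * Q2 (x - real j)) = (- 2506307/4354560 * real N - 107177/207360 * real N * x + 517219/3732480 * real N * x^2 + 26047/62208 * real N * x^3 + 48373/746496 * real N * x^4 - 28975/248832 * real N^2 - 375943/746496 * real N^2 * x - 48373/82944 * real N^2 * x^2 + 18605/124416 * real N^2 * x^3 + 3721/82944 * real N^2 * x^4 + 17507/82944 * real N^3 + 427/1536 * real N^3 * x - 160003/373248 * real N^3 * x^2 - 3721/62208 * real N^3 * x^3 + 3721/373248 * real N^3 * x^4 - 671/31104 * real N^4 + 264191/746496 * real N^4 * x - 3721/124416 * real N^4 * x^3 - 40931/414720 * real N^5 + 3721/103680 * real N^5 * x + 3721/103680 * real N^5 * x^2 - 3721/248832 * real N^6 - 3721/186624 * real N^6 * x + 3721/870912 * real N^7) + PB (real (Suc N)) * Q2 (x - real (Suc N))"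
    by (simp only: sumSuc Suc.IH)
  also have "... = (- 2506307/4354560 * real (Suc N) - 107177/207360 * real (Suc N) * x + 517219/3732480 * real (Suc N) * x^2 + 26047/62208 * real (Suc N) * x^3 + 48373/746496 * real (Suc N) * x^4 - 28975/248832 * real (Suc N)^2 - 375943/746496 * real (Suc N)^2 * x - 48373/82944 * real (Suc N)^2 * x^2 + 18605/124416 * real (Suc N)^2 * x^3 + 3721/82944 * real (Suc N)^2 * x^4 + 17507/82944 * real (Suc N)^3 + 427/1536 * real (Suc N)^3 * x - 160003/373248 * real (Suc N)^3 * x^2 - 3721/62208 * real (Suc N)^3 * x^3 + 3721/373248 * real (Suc N)^3 * x^4 - 671/31104 * real (Suc N)^4 + 264191/746496 * real (Suc N)^4 * x - 3721/124416 * real (Suc N)^4 * x^3 - 40931/414720 * real (Suc N)^5 + 3721/103680 * real (Suc N)^5 * x + 3721/103680 * real (Suc N)^5 * x^2 - 3721/248832 * real (Suc N)^6 - 3721/186624 * real (Suc N)^6 * x + 3721/870912 * real (Suc N)^7)" unfolding PB_def Q2_def of_nat_Suc by algebra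
  finally show ?case .
qed

lemma main_BO2: assumes m: "1 \<le> m" shows "(\<Sum>j=1..m-1. PB (real j) * Q2 (real (m - j))) = (793/2592 + 158173/4354560 * real m - 407297/1244160 * real m^2 - 574681/3732480 * real m^3 + 7625/82944 * real m^4 + 152561/3732480 * real m^5 + 3721/622080 * real m^6 + 3721/13063680 * real m^7)"
proof -
  have "(\<Sum>j=1..m-1. PB (real j) * Q2 (real (m - j))) = (\<Sum>j=1..m-1. PB (real j) * Q2 (real m - real j))"
    by (rule sum.cong) (auto simp: of_nat_diff)
  also have "... = (- 2506307/4354560 * real (m - 1) - 107177/207360 * real (m - 1) * real m + 517219/3732480 * real (m - 1) * real m^2 + 26047/62208 * real (m - 1) * real m^3 + 48373/746496 * real (m - 1) * real m^4 - 28975/248832 * real (m - 1)^2 - 375943/746496 * real (m - 1)^2 * real m - 48373/82944 * real (m - 1)^2 * real m^2 + 18605/124416 * real (m - 1)^2 * real m^3 + 3721/82944 * real (m - 1)^2 * real m^4 + 17507/82944 * real (m - 1)^3 + 427/1536 * real (m - 1)^3 * real m - 160003/373248 * real (m - 1)^3 * real m^2 - 3721/62208 * real (m - 1)^3 * real m^3 + 3721/373248 * real (m - 1)^3 * real m^4 - 671/31104 * real (m - 1)^4 + 264191/746496 * real (m - 1)^4 * real m - 3721/124416 * real (m - 1)^4 * real m^3 - 40931/414720 * real (m - 1)^5 + 3721/103680 * real (m - 1)^5 * real m + 3721/103680 * real (m - 1)^5 * real m^2 - 3721/248832 * real (m - 1)^6 - 3721/186624 * real (m - 1)^6 * real m +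 3721/870912 * real (m - 1)^7)" by (rule anti_BO2)
  also have "... = (793/2592 + 158173/4354560 * real m - 407297/1244160 * real m^2 - 574681/3732480 * real m^3 + 7625/82944 * real m^4 + 152561/3732480 * real m^5 + 3721/622080 * real m^6 + 3721/13063680 * real m^7)" unfolding of_nat_diff[OF m] of_nat_1 by algebra
  finally show ?thesis .
qed

lemma conv_BO2: assumes m: "7 \<le> m" shows "(\<Sum>j=1..m-1. be j * om2 (m-j)) = (521/1728 - 319489/1451520 * real m - 780007/1244160 * real m^2 - 252601/3732480 * real m^3 + 27145/248832 * real m^4 + 152561/3732480 * real m^5 + 3721/622080 * real m^6 + 3721/13063680 * real m^7)"
proof -
  have cs: "(\<Sum>j=1..m-1. be j * om2 (m-j)) = (\<Sum>j=1..m-1. PB (real j) * Q2 (real (m - j))) + (\<Sum>j=1..2. (be j - PB (real j)) * Q2 (real (m-j))) + (\<Sum>k=1..3. PB (real (m-k)) * (om2 k - Q2 (real k)))"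
    by (rule conv_split1[where p="\<lambda>j. PB (real j)" and q="\<lambda>j. Q2 (real j)"]) (use m in \<open>auto simp: thr_be thr_om2\<close>)
  have mm: "1 \<le> m" using m by simp
  have d: "real (m - 1) = real m - 1" "real (m - 2) = real m - 2" "real (m - 3) = real m - 3" using m by (simp_all add: of_nat_diff)
  show ?thesis unfolding cs main_BO2[OF mm] unfolding sumE2 sumE3 d vals2 of_nat_1 of_nat_numeral PB_def Q2_def power_one
    by algebra
qed

lemma anti_CO0: "(\<Sum>j=1..N. PC (real j) * Q0 (x - real j)) = (- 22587953/36288000 * real N - 113035763/186624000 * real N * x + 3571573/6220800 * real N * x^2 + 4357273/37324800 * real N * x^3 - 1799029/9331200 * real N^2 - 28283213/24883200 * real N^2 * x + 242723/829440 * real N^2 * x^2 + 2447551/24883200 * real N^2 * x^3 + 5069411/12441600 * real N^3 - 13313413/18662400 * real N^3 * x - 65761/1555200 * real N^3 * x^2 + 1249967/37324800 * real N^3 * x^3 + 2558323/7464960 * real N^4 - 107909/995328 * real N^4 * x - 242723/4147200 * real N^4 * x^2 + 3721/995328 * real N^4 * x^3 + 502907/6912000 * real N^5 + 691817/20736000 * real N^5 * x - 3721/414720 * real N^5 * x^2 - 206371/37324800 * real N^6 + 3721/497664 * real N^6 * x - 3721/1741824 * real N^7)"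
proof (induction N)
  case 0 then show ?case by simp
next
  case (Suc N)
  have "(\<Sum>j=1..Suc N. PC (real j) * Q0 (x - real j)) = (- 22587953/36288000 * real N - 113035763/186624000 * real N * x + 3571573/6220800 * real N * x^2 + 4357273/37324800 * real N * x^3 - 1799029/9331200 * real N^2 - 28283213/24883200 * real N^2 * x + 242723/829440 * real N^2 * x^2 + 2447551/24883200 * real N^2 * x^3 + 5069411/12441600 * real N^3 - 13313413/18662400 * real N^3 * x - 65761/1555200 * real N^3 * x^2 + 1249967/37324800 * real N^3 * x^3 + 2558323/7464960 * real N^4 - 107909/995328 * real N^4 * x - 242723/4147200 * real N^4 * x^2 + 3721/995328 * real N^4 * x^3 + 502907/6912000 * real N^5 + 691817/20736000 * real N^5 * x - 3721/414720 * real N^5 * x^2 - 206371/37324800 * real N^6 + 3721/497664 * real N^6 * x - 3721/1741824 * real N^7) + PC (real (Suc N)) * Q0 (x - real (Suc N))"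
    by (simp only: sumSuc Suc.IH)
  also have "... = (- 22587953/36288000 * real (Suc N) - 113035763/186624000 * real (Suc N) * x + 3571573/6220800 * real (Suc N) * x^2 + 4357273/37324800 * real (Suc N) * x^3 - 1799029/9331200 * real (Suc N)^2 - 28283213/24883200 * real (Suc N)^2 * x + 242723/829440 * real (Suc N)^2 * x^2 + 2447551/24883200 * real (Suc N)^2 * x^3 + 5069411/12441600 * real (Suc N)^3 - 13313413/18662400 * real (Suc N)^3 * x - 65761/1555200 * real (Suc N)^3 * x^2 + 1249967/37324800 * real (Suc N)^3 * x^3 + 2558323/7464960 * real (Suc N)^4 - 107909/995328 * real (Suc N)^4 * x - 242723/4147200 * real (Suc N)^4 * x^2 + 3721/995328 * real (Suc N)^4 * x^3 + 502907/6912000 * real (Suc N)^5 + 691817/20736000 * real (Suc N)^5 * x - 3721/414720 * real (Suc N)^5 * x^2 - 206371/37324800 * real (Suc N)^6 + 3721/497664 * real (Suc N)^6 * x - 3721/1741824 * real (Suc N)^7)" unfolding PC_def Q0_def of_nat_Suc by algebra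
  finally show ?case .
qed

lemma main_CO0: assumes m: "1 \<le> m" shows "(\<Sum>j=1..m-1. PC (real j) * Q0 (real (m - j))) = (74849/259200 + 812821/18144000 * real m - 61636063/186624000 * real m^2 - 180611/2764800 * real m^3 + 1444597/37324800 * real m^4 + 79393/3888000 * real m^5 + 260899/93312000 * real m^6 + 3721/34836480 * real m^7)"
proof -
  have "(\<Sum>j=1..m-1. PC (real j) * Q0 (real (m - j))) = (\<Sum>j=1..m-1. PC (real j) * Q0 (real m - real j))"
    by (rule sum.cong) (auto simp: of_nat_diff)
  also have "... = (- 22587953/36288000 * real (m - 1) - 113035763/186624000 * real (m - 1) * real m + 3571573/6220800 * real (m - 1) * real m^2 + 4357273/37324800 * real (m - 1) * real m^3 - 1799029/9331200 * real (m - 1)^2 - 28283213/24883200 * real (m - 1)^2 * real m + 242723/829440 * real (m - 1)^2 * real m^2 + 2447551/24883200 * real (m - 1)^2 * real m^3 + 5069411/12441600 * real (m - 1)^3 - 13313413/18662400 * real (m - 1)^3 * real m - 65761/1555200 * real (m - 1)^3 * real m^2 + 1249967/37324800 * real (m - 1)^3 * real m^3 + 2558323/7464960 * real (m - 1)^4 - 107909/995328 * real (m - 1)^4 * real m - 242723/4147200 * real (m - 1)^4 * real m^2 + 3721/995328 * real (m - 1)^4 * real m^3 + 502907/6912000 * real (m - 1)^5 + 691817/20736000 * real (m - 1)^5 * real m - 3721/414720 * real (m - 1)^5 * real m^2 - 206371/37324800 * real (m - 1)^6 + 3721/497664 * real (m - 1)^6 * real m - 3721/1741824 * real (m - 1)^7)"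 by (rule anti_CO0)
  also have "... = (74849/259200 + 812821/18144000 * real m - 61636063/186624000 * real m^2 - 180611/2764800 * real m^3 + 1444597/37324800 * real m^4 + 79393/3888000 * real m^5 + 260899/93312000 * real m^6 + 3721/34836480 * real m^7)" unfolding of_nat_diff[OF m] of_nat_1 by algebra
  finally show ?thesis .
qed

lemma conv_CO0: assumes m: "8 \<le> m" shows "(\<Sum>j=1..m-1. ga j * om0 (m-j)) = (- 3421/172800 - 3931783/13608000 * real m - 21257383/186624000 * real m^2 - 97967/4976640 * real m^3 + 1444597/37324800 * real m^4 + 79393/3888000 * real m^5 + 260899/93312000 * real m^6 + 3721/34836480 * real m^7)"
proof -
  have cs: "(\<Sum>j=1..m-1. ga j * om0 (m-j)) = (\<Sum>j=1..m-1. PC (real j) * Q0 (real (m - j))) + (\<Sum>j=1..5. (ga j - PC (real j)) * Q0 (real (m-j))) + (\<Sum>k=1..1. PC (real (m-k)) * (om0 k - Q0 (real k)))"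
    by (rule conv_split1[where p="\<lambda>j. PC (real j)" and q="\<lambda>j. Q0 (real j)"]) (use m in \<open>auto simp: thr_ga thr_om0\<close>)
  have mm: "1 \<le> m" using m by simp
  have d: "real (m - 1) = real m - 1" "real (m - 2) = real m - 2" "real (m - 3) = real m - 3" "real (m - 4) = real m - 4" "real (m - 5) = real m - 5" using m by (simp_all add: of_nat_diff)
  show ?thesis unfolding cs main_CO0[OF mm] unfolding sumE1 sumE5 d vals2 of_nat_1 of_nat_numeral PC_def Q0_def power_one
    by algebra
qed

lemma anti_wAA: "(\<Sum>j=1..N. (x - 2 * real j)^2 * (PA (real j) * PA (x - real j))) = (4/5 * real N - 4/3 * real N * x - 11/6 * real N * x^2 + 3/2 * real N * x^3 + 2 * real N^2 + 2 * real N^2 * x - 9/2 * real N^2 * x^2 + 1/2 * real N^2 * x^3 + 16/3 * real N^3 * x - 5/3 * real N^3 * x^2 - 2 * real N^4 + 2 * real N^4 * x - 4/5 * real N^5)"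
proof (induction N)
  case 0 then show ?case by simp
next
  case (Suc N)
  have "(\<Sum>j=1..Suc N. (x - 2 * real j)^2 * (PA (real j) * PA (x - real j))) = (4/5 * real N - 4/3 * real N * x - 11/6 * real N * x^2 + 3/2 * real N * x^3 + 2 * real N^2 + 2 * real N^2 * x - 9/2 * real N^2 * x^2 + 1/2 * real N^2 * x^3 + 16/3 * real N^3 * x - 5/3 * real N^3 * x^2 - 2 * real N^4 + 2 * real N^4 * x - 4/5 * real N^5) + (x - 2 * real (Suc N))^2 * (PA (real (Suc N)) * PA (x - real (Suc N)))"
    by (simp only: sumSuc Suc.IH)
  also have "... = (4/5 * real (Suc N) - 4/3 * real (Suc N) * x - 11/6 * real (Suc N) * x^2 + 3/2 * real (Suc N) * x^3 + 2 * real (Suc N)^2 + 2 * real (Suc N)^2 * x - 9/2 * real (Suc N)^2 * x^2 + 1/2 * real (Suc N)^2 * x^3 + 16/3 * real (Suc N)^3 * x - 5/3 * real (Suc N)^3 * x^2 - 2 * real (Suc N)^4 + 2 * real (Suc N)^4 * x - 4/5 * real (Suc N)^5)" unfolding PA_def of_nat_Suc by algebra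
  finally show ?case .
qed

lemma main_wAA: assumes m: "1 \<le> m" shows "(\<Sum>j=1..m-1. (real m - 2 * real j)^2 * (PA (real j) * PA (real (m - j)))) = (4/5 * real m - 1/3 * real m^2 - 5/6 * real m^3 + 1/3 * real m^4 + 1/30 * real m^5)"
proof -
  have "(\<Sum>j=1..m-1. (real m - 2 * real j)^2 * (PA (real j) * PA (real (m - j)))) = (\<Sum>j=1..m-1. (real m - 2 * real j)^2 * (PA (real j) * PA (real m - real j)))"
    by (rule sum.cong) (auto simp: of_nat_diff)
  also have "... = (4/5 * real (m - 1) - 4/3 * real (m - 1) * real m - 11/6 * real (m - 1) * real m^2 + 3/2 * real (m - 1) * real m^3 + 2 * real (m - 1)^2 + 2 * real (m - 1)^2 * real m - 9/2 * real (m - 1)^2 * real m^2 + 1/2 * real (m - 1)^2 * real m^3 + 16/3 * real (m - 1)^3 * real m - 5/3 * real (m - 1)^3 * real m^2 - 2 * real (m - 1)^4 + 2 * real (m - 1)^4 * real m - 4/5 * real (m - 1)^5)" by (rule anti_wAA)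
  also have "... = (4/5 * real m - 1/3 * real m^2 - 5/6 * real m^3 + 1/3 * real m^4 + 1/30 * real m^5)" unfolding of_nat_diff[OF m] of_nat_1 by algebra
  finally show ?thesis .
qed

lemma conv_wAA: assumes m: "2 \<le> m" shows "(\<Sum>j=1..m-1. (real m - 2 * real j)^2 * (al j * al (m-j))) = (4/5 * real m - 1/3 * real m^2 - 5/6 * real m^3 + 1/3 * real m^4 + 1/30 * real m^5)"
proof -
  have cs: "(\<Sum>j=1..m-1. (real m - 2 * real j)^2 * (al j * al (m-j))) = (\<Sum>j=1..m-1. (real m - 2 * real j)^2 * (PA (real j) * PA (real (m - j)))) + (\<Sum>j=1..0. (real m - 2 * real j)^2 * ((al j - PA (real j)) * PA (real (m-j)))) + (\<Sum>k=1..0. (real m - 2 * real (m-k))^2 * (PA (real (m-k)) * (al k - PA (real k))))"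
    by (rule conv_split[where p="\<lambda>j. PA (real j)" and q="\<lambda>j. PA (real j)" and w="\<lambda>j. (real m - 2 * real j)^2"]) (use m in \<open>auto simp: thr_al thr_al\<close>)
  have mm: "1 \<le> m" using m by simp
  show ?thesis unfolding cs main_wAA[OF mm] unfolding sumE0 vals2 of_nat_1 of_nat_numeral PA_def power_one
    by algebra
qed

lemma anti_wAB: "(\<Sum>j=1..N. (x - 2 * real j)^2 * (PA (real j) * PB (x - real j))) = (- 61/180 * real N - 61/360 * real N * x + 61/48 * real N * x^2 + 61/144 * real N * x^3 - 61/96 * real N * x^4 - 61/216 * real N^2 - 305/144 * real N^2 * x - 61/576 * real N^2 * x^2 + 305/144 * real N^2 * x^3 - 61/288 * real N^2 * x^4 + 61/72 * real N^3 - 61/72 * real N^3 * x - 305/96 * real N^3 * x^2 + 61/72 * real N^3 * x^3 + 61/108 * real N^4 + 305/144 * real N^4 * x - 793/576 * real N^4 * x^2 - 61/120 * real N^5 + 61/60 * real N^5 * x - 61/216 * real N^6)"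
proof (induction N)
  case 0 then show ?case by simp
next
  case (Suc N)
  have "(\<Sum>j=1..Suc N. (x - 2 * real j)^2 * (PA (real j) * PB (x - real j))) = (- 61/180 * real N - 61/360 * real N * x + 61/48 * real N * x^2 + 61/144 * real N * x^3 - 61/96 * real N * x^4 - 61/216 * real N^2 - 305/144 * real N^2 * x - 61/576 * real N^2 * x^2 + 305/144 * real N^2 * x^3 - 61/288 * real N^2 * x^4 + 61/72 * real N^3 - 61/72 * real N^3 * x - 305/96 * real N^3 * x^2 + 61/72 * real N^3 * x^3 + 61/108 * real N^4 + 305/144 * real N^4 * x - 793/576 * real N^4 * x^2 - 61/120 * real N^5 + 61/60 * real N^5 * x - 61/216 * real N^6) + (x - 2 * real (Suc N))^2 * (PA (real (Suc N)) * PB (x - real (Suc N)))"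
    by (simp only: sumSuc Suc.IH)
  also have "... = (- 61/180 * real (Suc N) - 61/360 * real (Suc N) * x + 61/48 * real (Suc N) * x^2 + 61/144 * real (Suc N) * x^3 - 61/96 * real (Suc N) * x^4 - 61/216 * real (Suc N)^2 - 305/144 * real (Suc N)^2 * x - 61/576 * real (Suc N)^2 * x^2 + 305/144 * real (Suc N)^2 * x^3 - 61/288 * real (Suc N)^2 * x^4 + 61/72 * real (Suc N)^3 - 61/72 * real (Suc N)^3 * x - 305/96 * real (Suc N)^3 * x^2 + 61/72 * real (Suc N)^3 * x^3 + 61/108 * real (Suc N)^4 + 305/144 * real (Suc N)^4 * x - 793/576 * real (Suc N)^4 * x^2 - 61/120 * real (Suc N)^5 + 61/60 * real (Suc N)^5 * x - 61/216 * real (Suc N)^6)" unfolding PA_def PB_def of_nat_Suc by algebra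
  finally show ?case .
qed

lemma main_wAB: assumes m: "1 \<le> m" shows "(\<Sum>j=1..m-1. (real m - 2 * real j)^2 * (PA (real j) * PB (real (m - j)))) = (- 61/180 * real m - 61/2160 * real m^2 + 61/144 * real m^3 + 61/1728 * real m^4 - 61/720 * real m^5 - 61/8640 * real m^6)"
proof -
  have "(\<Sum>j=1..m-1. (real m - 2 * real j)^2 * (PA (real j) * PB (real (m - j)))) = (\<Sum>j=1..m-1. (real m - 2 * real j)^2 * (PA (real j) * PB (real m - real j)))"
    by (rule sum.cong) (auto simp: of_nat_diff)
  also have "... = (- 61/180 * real (m - 1) - 61/360 * real (m - 1) * real m + 61/48 * real (m - 1) * real m^2 + 61/144 * real (m - 1) * real m^3 - 61/96 * real (m - 1) * real m^4 - 61/216 * real (m - 1)^2 - 305/144 * real (m - 1)^2 * real m - 61/576 * real (m - 1)^2 * real m^2 + 305/144 * real (m - 1)^2 * real m^3 - 61/288 * real (m - 1)^2 * real m^4 + 61/72 * real (m - 1)^3 - 61/72 * real (m - 1)^3 * real m - 305/96 * real (m - 1)^3 * real m^2 + 61/72 * real (m - 1)^3 * real m^3 + 61/108 * real (m - 1)^4 + 305/144 * real (m - 1)^4 * real m - 793/576 * real (m - 1)^4 * real m^2 - 61/120 * real (m - 1)^5 + 61/60 * real (m - 1)^5 * real m - 61/216 * real (m - 1)^6)" by (rule anti_wAB)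
  also have "... = (- 61/180 * real m - 61/2160 * real m^2 + 61/144 * real m^3 + 61/1728 * real m^4 - 61/720 * real m^5 - 61/8640 * real m^6)" unfolding of_nat_diff[OF m] of_nat_1 by algebra
  finally show ?thesis .
qed

lemma conv_wAB: assumes m: "4 \<le> m" shows "(\<Sum>j=1..m-1. (real m - 2 * real j)^2 * (al j * be (m-j))) = (- 1 - 11/180 * real m + 341/540 * real m^2 + 13/72 * real m^3 + 61/1728 * real m^4 - 61/720 * real m^5 - 61/8640 * real m^6)"
proof -
  have cs: "(\<Sum>j=1..m-1. (real m - 2 * real j)^2 * (al j * be (m-j))) = (\<Sum>j=1..m-1. (real m - 2 * real j)^2 * (PA (real j) * PB (real (m - j)))) + (\<Sum>j=1..0. (real m - 2 * real j)^2 * ((al j - PA (real j)) * PB (real (m-j)))) + (\<Sum>k=1..2. (real m - 2 * real (m-k))^2 * (PA (real (m-k)) * (be k - PB (real k))))"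
    by (rule conv_split[where p="\<lambda>j. PA (real j)" and q="\<lambda>j. PB (real j)" and w="\<lambda>j. (real m - 2 * real j)^2"]) (use m in \<open>auto simp: thr_al thr_be\<close>)
  have mm: "1 \<le> m" using m by simp
  have d: "real (m - 1) = real m - 1" "real (m - 2) = real m - 2" using m by (simp_all add: of_nat_diff)
  show ?thesis unfolding cs main_wAB[OF mm] unfolding sumE0 sumE2 d vals2 of_nat_1 of_nat_numeral PA_def PB_def power_one
    by algebra
qed

lemma anti_wBA: "(\<Sum>j=1..N. (x - 2 * real j)^2 * (PB (real j) * PA (x - real j))) = (- 61/180 * real N + 1037/1080 * real N * x + 61/72 * real N * x^2 - 793/864 * real N * x^3 - 305/216 * real N^2 - 61/144 * real N^2 * x + 1769/576 * real N^2 * x^2 - 61/96 * real N^2 * x^3 - 61/72 * real N^3 - 793/216 * real N^3 * x + 671/288 * real N^3 * x^2 - 61/432 * real N^3 * x^3 + 61/54 * real N^4 - 427/144 * real N^4 * x + 305/576 * real N^4 * x^2 + 427/360 * real N^5 - 61/90 * real N^5 * x + 61/216 * real N^6)"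
proof (induction N)
  case 0 then show ?case by simp
next
  case (Suc N)
  have "(\<Sum>j=1..Suc N. (x - 2 * real j)^2 * (PB (real j) * PA (x - real j))) = (- 61/180 * real N + 1037/1080 * real N * x + 61/72 * real N * x^2 - 793/864 * real N * x^3 - 305/216 * real N^2 - 61/144 * real N^2 * x + 1769/576 * real N^2 * x^2 - 61/96 * real N^2 * x^3 - 61/72 * real N^3 - 793/216 * real N^3 * x + 671/288 * real N^3 * x^2 - 61/432 * real N^3 * x^3 + 61/54 * real N^4 - 427/144 * real N^4 * x + 305/576 * real N^4 * x^2 + 427/360 * real N^5 - 61/90 * real N^5 * x + 61/216 * real N^6) + (x - 2 * real (Suc N))^2 * (PB (real (Suc N)) * PA (x - real (Suc N)))"
    by (simp only: sumSuc Suc.IH)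
  also have "... = (- 61/180 * real (Suc N) + 1037/1080 * real (Suc N) * x + 61/72 * real (Suc N) * x^2 - 793/864 * real (Suc N) * x^3 - 305/216 * real (Suc N)^2 - 61/144 * real (Suc N)^2 * x + 1769/576 * real (Suc N)^2 * x^2 - 61/96 * real (Suc N)^2 * x^3 - 61/72 * real (Suc N)^3 - 793/216 * real (Suc N)^3 * x + 671/288 * real (Suc N)^3 * x^2 - 61/432 * real (Suc N)^3 * x^3 + 61/54 * real (Suc N)^4 - 427/144 * real (Suc N)^4 * x + 305/576 * real (Suc N)^4 * x^2 + 427/360 * real (Suc N)^5 - 61/90 * real (Suc N)^5 * x + 61/216 * real (Suc N)^6)" unfolding PA_def PB_def of_nat_Suc by algebra
  finally show ?case .
qed

lemma main_wBA: assumes m: "1 \<le> m" shows "(\<Sum>j=1..m-1. (real m - 2 * real j)^2 * (PB (real j) * PA (real (m - j)))) = (- 61/180 * real m - 61/2160 * real m^2 + 61/144 * real m^3 + 61/1728 * real m^4 - 61/720 * real m^5 - 61/8640 * real m^6)"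
proof -
  have "(\<Sum>j=1..m-1. (real m - 2 * real j)^2 * (PB (real j) * PA (real (m - j)))) = (\<Sum>j=1..m-1. (real m - 2 * real j)^2 * (PB (real j) * PA (real m - real j)))"
    by (rule sum.cong) (auto simp: of_nat_diff)
  also have "... = (- 61/180 * real (m - 1) + 1037/1080 * real (m - 1) * real m + 61/72 * real (m - 1) * real m^2 - 793/864 * real (m - 1) * real m^3 - 305/216 * real (m - 1)^2 - 61/144 * real (m - 1)^2 * real m + 1769/576 * real (m - 1)^2 * real m^2 - 61/96 * real (m - 1)^2 * real m^3 - 61/72 * real (m - 1)^3 - 793/216 * real (m - 1)^3 * real m + 671/288 * real (m - 1)^3 * real m^2 - 61/432 * real (m - 1)^3 * real m^3 + 61/54 * real (m - 1)^4 - 427/144 * real (m - 1)^4 * real m + 305/576 * real (m - 1)^4 * real m^2 + 427/360 * real (m - 1)^5 - 61/90 * real (m - 1)^5 * real m + 61/216 * real (m - 1)^6)" by (rule anti_wBA)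
  also have "... = (- 61/180 * real m - 61/2160 * real m^2 + 61/144 * real m^3 + 61/1728 * real m^4 - 61/720 * real m^5 - 61/8640 * real m^6)" unfolding of_nat_diff[OF m] of_nat_1 by algebra
  finally show ?thesis .
qed

lemma conv_wBA: assumes m: "4 \<le> m" shows "(\<Sum>j=1..m-1. (real m - 2 * real j)^2 * (be j * al (m-j))) = (- 1 - 11/180 * real m + 341/540 * real m^2 + 13/72 * real m^3 + 61/1728 * real m^4 - 61/720 * real m^5 - 61/8640 * real m^6)"
proof -
  have cs: "(\<Sum>j=1..m-1. (real m - 2 * real j)^2 * (be j * al (m-j))) = (\<Sum>j=1..m-1. (real m - 2 * real j)^2 * (PB (real j) * PA (real (m - j)))) + (\<Sum>j=1..2. (real m - 2 * real j)^2 * ((be j - PB (real j)) * PA (real (m-j)))) + (\<Sum>k=1..0. (real m - 2 * real (m-k))^2 * (PB (real (m-k)) * (al k - PA (real k))))"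
    by (rule conv_split[where p="\<lambda>j. PB (real j)" and q="\<lambda>j. PA (real j)" and w="\<lambda>j. (real m - 2 * real j)^2"]) (use m in \<open>auto simp: thr_be thr_al\<close>)
  have mm: "1 \<le> m" using m by simp
  have d: "real (m - 1) = real m - 1" "real (m - 2) = real m - 2" using m by (simp_all add: of_nat_diff)
  show ?thesis unfolding cs main_wBA[OF mm] unfolding sumE0 sumE2 d vals2 of_nat_1 of_nat_numeral PA_def PB_def power_one
    by algebra
qed

lemma anti_wAC: "(\<Sum>j=1..N. (x - 2 * real j)^2 * (PA (real j) * PC (x - real j))) = (318287/1512000 * real N + 27979/108000 * real N * x - 4365853/6220800 * real N * x^2 - 914219/1555200 * real N * x^3 + 882157/3110400 * real N * x^4 + 3721/27648 * real N * x^5 + 2099/28800 * real N^2 + 102971/77760 * real N^2 * x + 3369221/4147200 * real N^2 * x^2 - 992929/829440 * real N^2 * x^3 - 102113/259200 * real N^2 * x^4 + 3721/82944 * real N^2 * x^5 - 74849/129600 * real N^3 - 284/2025 * real N^3 * x + 2601539/1244160 * real N^3 * x^2 + 3012023/6220800 * real N^3 * x^3 - 26047/124416 * real N^3 * x^4 - 2099/14400 * real N^4 - 15197/9720 * real N^4 * x - 666077/4147200 * real N^4 * x^2 + 70699/165888 * real N^4 * x^3 + 542119/1296000 * real N^5 - 38497/324000 * real N^5 * x - 18605/41472 * real N^5 * x^2 + 2099/28800 * real N^6 + 3721/15552 * real N^6 * x - 3721/72576 * real N^7)"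
proof (induction N)
  case 0 then show ?case by simp
next
  case (Suc N)
  have "(\<Sum>j=1..Suc N. (x - 2 * real j)^2 * (PA (real j) * PC (x - real j))) = (318287/1512000 * real N + 27979/108000 * real N * x - 4365853/6220800 * real N * x^2 - 914219/1555200 * real N * x^3 + 882157/3110400 * real N * x^4 + 3721/27648 * real N * x^5 + 2099/28800 * real N^2 + 102971/77760 * real N^2 * x + 3369221/4147200 * real N^2 * x^2 - 992929/829440 * real N^2 * x^3 - 102113/259200 * real N^2 * x^4 + 3721/82944 * real N^2 * x^5 - 74849/129600 * real N^3 - 284/2025 * real N^3 * x + 2601539/1244160 * real N^3 * x^2 + 3012023/6220800 * real N^3 * x^3 - 26047/124416 * real N^3 * x^4 - 2099/14400 * real N^4 - 15197/9720 * real N^4 * x - 666077/4147200 * real N^4 * x^2 + 70699/165888 * real N^4 * x^3 + 542119/1296000 * real N^5 - 38497/324000 * real N^5 * x - 18605/41472 * real N^5 * x^2 + 2099/28800 * real N^6 + 3721/15552 * real N^6 * x - 3721/72576 * real N^7) + (x - 2 * real (Suc N))^2 * (PA (real (Suc N)) * PC (x - real (Suc N)))"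
    by (simp only: sumSuc Suc.IH)
  also have "... = (318287/1512000 * real (Suc N) + 27979/108000 * real (Suc N) * x - 4365853/6220800 * real (Suc N) * x^2 - 914219/1555200 * real (Suc N) * x^3 + 882157/3110400 * real (Suc N) * x^4 + 3721/27648 * real (Suc N) * x^5 + 2099/28800 * real (Suc N)^2 + 102971/77760 * real (Suc N)^2 * x + 3369221/4147200 * real (Suc N)^2 * x^2 - 992929/829440 * real (Suc N)^2 * x^3 - 102113/259200 * real (Suc N)^2 * x^4 + 3721/82944 * real (Suc N)^2 * x^5 - 74849/129600 * real (Suc N)^3 - 284/2025 * real (Suc N)^3 * x + 2601539/1244160 * real (Suc N)^3 * x^2 + 3012023/6220800 * real (Suc N)^3 * x^3 - 26047/124416 * real (Suc N)^3 * x^4 - 2099/14400 * real (Suc N)^4 - 15197/9720 * real (Suc N)^4 * x - 666077/4147200 * real (Suc N)^4 * x^2 + 70699/165888 * real (Suc N)^4 * x^3 + 542119/1296000 * real (Suc N)^5 - 38497/324000 * real (Suc N)^5 * x - 18605/41472 * real (Suc N)^5 * x^2 + 2099/28800 * real (Suc N)^6 + 3721/15552 * real (Suc N)^6 * x - 3721/72576 * real (Suc N)^7)" unfolding PA_def PC_def of_nat_Suc by algebra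
  finally show ?case .
qed

lemma main_wAC: assumes m: "1 \<le> m" shows "(\<Sum>j=1..m-1. (real m - 2 * real j)^2 * (PA (real j) * PC (real (m - j)))) = (318287/1512000 * real m + 27979/648000 * real m^2 - 168589/691200 * real m^3 - 764521/12441600 * real m^4 + 2011327/62208000 * real m^5 + 1136621/62208000 * real m^6 + 3721/3483648 * real m^7)"
proof -
  have "(\<Sum>j=1..m-1. (real m - 2 * real j)^2 * (PA (real j) * PC (real (m - j)))) = (\<Sum>j=1..m-1. (real m - 2 * real j)^2 * (PA (real j) * PC (real m - real j)))"
    by (rule sum.cong) (auto simp: of_nat_diff)
  also have "... = (318287/1512000 * real (m - 1) + 27979/108000 * real (m - 1) * real m - 4365853/6220800 * real (m - 1) * real m^2 - 914219/1555200 * real (m - 1) * real m^3 + 882157/3110400 * real (m - 1) * real m^4 + 3721/27648 * real (m - 1) * real m^5 + 2099/28800 * real (m - 1)^2 + 102971/77760 * real (m - 1)^2 * real m + 3369221/4147200 * real (m - 1)^2 * real m^2 - 992929/829440 * real (m - 1)^2 * real m^3 - 102113/259200 * real (m - 1)^2 * real m^4 + 3721/82944 * real (m - 1)^2 * real m^5 - 74849/129600 * real (m - 1)^3 - 284/2025 * real (m - 1)^3 * real m + 2601539/1244160 * real (m - 1)^3 * real m^2 + 3012023/6220800 * real (m - 1)^3 * real m^3 - 26047/124416 * real (m - 1)^3 * real m^4 - 2099/14400 * real (m - 1)^4 - 15197/9720 * real (m - 1)^4 * real m - 666077/4147200 * real (m - 1)^4 * real m^2 + 70699/165888 * real (m -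 1)^4 * real m^3 + 542119/1296000 * real (m - 1)^5 - 38497/324000 * real (m - 1)^5 * real m - 18605/41472 * real (m - 1)^5 * real m^2 + 2099/28800 * real (m - 1)^6 + 3721/15552 * real (m - 1)^6 * real m - 3721/72576 * real (m - 1)^7)" by (rule anti_wAC)
  also have "... = (318287/1512000 * real m + 27979/648000 * real m^2 - 168589/691200 * real m^3 - 764521/12441600 * real m^4 + 2011327/62208000 * real m^5 + 1136621/62208000 * real m^6 + 3721/3483648 * real m^7)" unfolding of_nat_diff[OF m] of_nat_1 by algebra
  finally show ?thesis .
qed

lemma conv_wAC: assumes m: "7 \<le> m" shows "(\<Sum>j=1..m-1. (real m - 2 * real j)^2 * (al j * ga (m-j))) = (11171/10800 - 5354029/4536000 * real m - 167011/648000 * real m^2 + 12413/414720 * real m^3 - 764521/12441600 * real m^4 + 2011327/62208000 * real m^5 + 1136621/62208000 * real m^6 + 3721/3483648 * real m^7)"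
proof -
  have cs: "(\<Sum>j=1..m-1. (real m - 2 * real j)^2 * (al j * ga (m-j))) = (\<Sum>j=1..m-1. (real m - 2 * real j)^2 * (PA (real j) * PC (real (m - j)))) + (\<Sum>j=1..0. (real m - 2 * real j)^2 * ((al j - PA (real j)) * PC (real (m-j)))) + (\<Sum>k=1..5. (real m - 2 * real (m-k))^2 * (PA (real (m-k)) * (ga k - PC (real k))))"
    by (rule conv_split[where p="\<lambda>j. PA (real j)" and q="\<lambda>j. PC (real j)" and w="\<lambda>j. (real m - 2 * real j)^2"]) (use m in \<open>auto simp: thr_al thr_ga\<close>)
  have mm: "1 \<le> m" using m by simp
  have d: "real (m - 1) = real m - 1" "real (m - 2) = real m - 2" "real (m - 3) = real m - 3" "real (m - 4) = real m - 4" "real (m - 5) = real m - 5" using m by (simp_all add: of_nat_diff)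
  show ?thesis unfolding cs main_wAC[OF mm] unfolding sumE0 sumE5 d vals2 of_nat_1 of_nat_numeral PA_def PC_def power_one
    by algebra
qed

lemma anti_wBB: "(\<Sum>j=1..N. (x - 2 * real j)^2 * (PB (real j) * PB (x - real j))) = (3721/20160 * real N - 3721/51840 * real N * x - 494893/622080 * real N * x^2 - 3721/31104 * real N * x^3 + 48373/124416 * real N * x^4 + 3721/10368 * real N^2 + 26047/20736 * real N^2 * x - 3721/6912 * real N^2 * x^2 - 18605/13824 * real N^2 * x^3 + 3721/13824 * real N^2 * x^4 - 3721/10368 * real N^3 + 3721/2592 * real N^3 * x + 115351/62208 * real N^3 * x^2 - 70699/62208 * real N^3 * x^3 + 3721/62208 * real N^3 * x^4 - 3721/5184 * real N^4 - 18605/20736 * real N^4 * x + 26047/13824 * real N^4 * x^2 - 3721/13824 * real N^4 * x^3 + 3721/51840 * real N^5 - 70699/51840 * real N^5 * x + 48373/103680 * real N^5 * x^2 + 3721/10368 * real N^6 - 3721/10368 * real N^6 * x + 3721/36288 * real N^7)"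
proof (induction N)
  case 0 then show ?case by simp
next
  case (Suc N)
  have "(\<Sum>j=1..Suc N. (x - 2 * real j)^2 * (PB (real j) * PB (x - real j))) = (3721/20160 * real N - 3721/51840 * real N * x - 494893/622080 * real N * x^2 - 3721/31104 * real N * x^3 + 48373/124416 * real N * x^4 + 3721/10368 * real N^2 + 26047/20736 * real N^2 * x - 3721/6912 * real N^2 * x^2 - 18605/13824 * real N^2 * x^3 + 3721/13824 * real N^2 * x^4 - 3721/10368 * real N^3 + 3721/2592 * real N^3 * x + 115351/62208 * real N^3 * x^2 - 70699/62208 * real N^3 * x^3 + 3721/62208 * real N^3 * x^4 - 3721/5184 * real N^4 - 18605/20736 * real N^4 * x + 26047/13824 * real N^4 * x^2 - 3721/13824 * real N^4 * x^3 + 3721/51840 * real N^5 - 70699/51840 * real N^5 * x + 48373/103680 * real N^5 * x^2 + 3721/10368 * real N^6 - 3721/10368 * real N^6 * x + 3721/36288 * real N^7) + (x - 2 * real (Suc N))^2 * (PB (real (Suc N)) * PB (x - real (Suc N)))"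
    by (simp only: sumSuc Suc.IH)
  also have "... = (3721/20160 * real (Suc N) - 3721/51840 * real (Suc N) * x - 494893/622080 * real (Suc N) * x^2 - 3721/31104 * real (Suc N) * x^3 + 48373/124416 * real (Suc N) * x^4 + 3721/10368 * real (Suc N)^2 + 26047/20736 * real (Suc N)^2 * x - 3721/6912 * real (Suc N)^2 * x^2 - 18605/13824 * real (Suc N)^2 * x^3 + 3721/13824 * real (Suc N)^2 * x^4 - 3721/10368 * real (Suc N)^3 + 3721/2592 * real (Suc N)^3 * x + 115351/62208 * real (Suc N)^3 * x^2 - 70699/62208 * real (Suc N)^3 * x^3 + 3721/62208 * real (Suc N)^3 * x^4 - 3721/5184 * real (Suc N)^4 - 18605/20736 * real (Suc N)^4 * x + 26047/13824 * real (Suc N)^4 * x^2 - 3721/13824 * real (Suc N)^4 * x^3 + 3721/51840 * real (Suc N)^5 - 70699/51840 * real (Suc N)^5 * x + 48373/103680 * real (Suc N)^5 * x^2 + 3721/10368 * real (Suc N)^6 - 3721/10368 * real (Suc N)^6 * x + 3721/36288 * real (Suc N)^7)" unfolding PB_def of_nat_Suc by algebra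
  finally show ?case .
qed

lemma main_wBB: assumes m: "1 \<le> m" shows "(\<Sum>j=1..m-1. (real m - 2 * real j)^2 * (PB (real j) * PB (real (m - j)))) = (3721/20160 * real m + 3721/34560 * real m^2 - 160003/622080 * real m^3 - 3721/31104 * real m^4 + 3721/51840 * real m^5 + 3721/311040 * real m^6 + 3721/4354560 * real m^7)"
proof -
  have "(\<Sum>j=1..m-1. (real m - 2 * real j)^2 * (PB (real j) * PB (real (m - j)))) = (\<Sum>j=1..m-1. (real m - 2 * real j)^2 * (PB (real j) * PB (real m - real j)))"
    by (rule sum.cong) (auto simp: of_nat_diff)
  also have "... = (3721/20160 * real (m - 1) - 3721/51840 * real (m - 1) * real m - 494893/622080 * real (m - 1) * real m^2 - 3721/31104 * real (m - 1) * real m^3 + 48373/124416 * real (m - 1) * real m^4 + 3721/10368 * real (m - 1)^2 + 26047/20736 * real (m - 1)^2 * real m - 3721/6912 * real (m - 1)^2 * real m^2 - 18605/13824 * real (m - 1)^2 * real m^3 + 3721/13824 * real (m - 1)^2 * real m^4 - 3721/10368 * real (m - 1)^3 + 3721/2592 * real (m - 1)^3 * real m + 115351/62208 * real (m - 1)^3 * real m^2 - 70699/62208 * real (m - 1)^3 * real m^3 + 3721/62208 * real (m - 1)^3 * real m^4 - 3721/5184 * real (m - 1)^4 - 18605/20736 * real (m - 1)^4 * real m + 26047/13824 * real (m - 1)^4 * real m^2 - 3721/13824 * real (m - 1)^4 * real m^3 + 3721/51840 * real (m - 1)^5 - 70699/51840 * real (m - 1)^5 * real m + 48373/103680 * real (m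 - 1)^5 * real m^2 + 3721/10368 * real (m - 1)^6 - 3721/10368 * real (m - 1)^6 * real m + 3721/36288 * real (m - 1)^7)" by (rule anti_wBB)
  also have "... = (3721/20160 * real m + 3721/34560 * real m^2 - 160003/622080 * real m^3 - 3721/31104 * real m^4 + 3721/51840 * real m^5 + 3721/311040 * real m^6 + 3721/4354560 * real m^7)" unfolding of_nat_diff[OF m] of_nat_1 by algebra
  finally show ?thesis .
qed

lemma conv_wBB: assumes m: "6 \<le> m" shows "(\<Sum>j=1..m-1. (real m - 2 * real j)^2 * (be j * be (m-j))) = (- 61/72 + 46421/20160 * real m - 62647/103680 * real m^2 - 474763/622080 * real m^3 + 671/7776 * real m^4 + 3721/51840 * real m^5 + 3721/311040 * real m^6 + 3721/4354560 * real m^7)"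
proof -
  have cs: "(\<Sum>j=1..m-1. (real m - 2 * real j)^2 * (be j * be (m-j))) = (\<Sum>j=1..m-1. (real m - 2 * real j)^2 * (PB (real j) * PB (real (m - j)))) + (\<Sum>j=1..2. (real m - 2 * real j)^2 * ((be j - PB (real j)) * PB (real (m-j)))) + (\<Sum>k=1..2. (real m - 2 * real (m-k))^2 * (PB (real (m-k)) * (be k - PB (real k))))"
    by (rule conv_split[where p="\<lambda>j. PB (real j)" and q="\<lambda>j. PB (real j)" and w="\<lambda>j. (real m - 2 * real j)^2"]) (use m in \<open>auto simp: thr_be thr_be\<close>)
  have mm: "1 \<le> m" using m by simp
  have d: "real (m - 1) = real m - 1" "real (m - 2) = real m - 2" using m by (simp_all add: of_nat_diff)
  show ?thesis unfolding cs main_wBB[OF mm] unfolding sumE2 d vals2 of_nat_1 of_nat_numeral PB_def power_one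
    by algebra
qed

lemma anti_wCA: "(\<Sum>j=1..N. (x - 2 * real j)^2 * (PC (real j) * PA (x - real j))) = (318287/1512000 * real N - 486161/648000 * real N * x - 3499727/6220800 * real N * x^2 + 4357273/6220800 * real N * x^3 + 56101/51840 * real N^2 + 38497/777600 * real N^2 * x - 9891809/4147200 * real N^2 * x^2 + 2447551/4147200 * real N^2 * x^3 + 242723/259200 * real N^3 + 177677/64800 * real N^3 * x - 13880143/6220800 * real N^3 * x^2 + 1249967/6220800 * real N^3 * x^3 - 168589/259200 * real N^4 + 555751/194400 * real N^4 * x - 652891/829440 * real N^4 * x^2 + 3721/165888 * real N^4 * x^3 - 709993/648000 * real N^5 + 27979/27000 * real N^5 * x - 3721/41472 * real N^5 * x^2 - 27979/64800 * real N^6 + 3721/31104 * real N^6 * x - 3721/72576 * real N^7)"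
proof (induction N)
  case 0 then show ?case by simp
next
  case (Suc N)
  have "(\<Sum>j=1..Suc N. (x - 2 * real j)^2 * (PC (real j) * PA (x - real j))) = (318287/1512000 * real N - 486161/648000 * real N * x - 3499727/6220800 * real N * x^2 + 4357273/6220800 * real N * x^3 + 56101/51840 * real N^2 + 38497/777600 * real N^2 * x - 9891809/4147200 * real N^2 * x^2 + 2447551/4147200 * real N^2 * x^3 + 242723/259200 * real N^3 + 177677/64800 * real N^3 * x - 13880143/6220800 * real N^3 * x^2 + 1249967/6220800 * real N^3 * x^3 - 168589/259200 * real N^4 + 555751/194400 * real N^4 * x - 652891/829440 * real N^4 * x^2 + 3721/165888 * real N^4 * x^3 - 709993/648000 * real N^5 + 27979/27000 * real N^5 * x - 3721/41472 * real N^5 * x^2 - 27979/64800 * real N^6 + 3721/31104 * real N^6 * x - 3721/72576 * real N^7) + (x - 2 * real (Suc N))^2 * (PC (real (Suc N)) * PA (x - real (Suc N)))"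
    by (simp only: sumSuc Suc.IH)
  also have "... = (318287/1512000 * real (Suc N) - 486161/648000 * real (Suc N) * x - 3499727/6220800 * real (Suc N) * x^2 + 4357273/6220800 * real (Suc N) * x^3 + 56101/51840 * real (Suc N)^2 + 38497/777600 * real (Suc N)^2 * x - 9891809/4147200 * real (Suc N)^2 * x^2 + 2447551/4147200 * real (Suc N)^2 * x^3 + 242723/259200 * real (Suc N)^3 + 177677/64800 * real (Suc N)^3 * x - 13880143/6220800 * real (Suc N)^3 * x^2 + 1249967/6220800 * real (Suc N)^3 * x^3 - 168589/259200 * real (Suc N)^4 + 555751/194400 * real (Suc N)^4 * x - 652891/829440 * real (Suc N)^4 * x^2 + 3721/165888 * real (Suc N)^4 * x^3 - 709993/648000 * real (Suc N)^5 + 27979/27000 * real (Suc N)^5 * x - 3721/41472 * real (Suc N)^5 * x^2 - 27979/64800 * real (Suc N)^6 + 3721/31104 * real (Suc N)^6 * x - 3721/72576 * real (Suc N)^7)" unfolding PA_def PC_def of_nat_Suc by algebra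
  finally show ?case .
qed

lemma main_wCA: assumes m: "1 \<le> m" shows "(\<Sum>j=1..m-1. (real m - 2 * real j)^2 * (PC (real j) * PA (real (m - j)))) = (318287/1512000 * real m + 27979/648000 * real m^2 - 168589/691200 * real m^3 - 764521/12441600 * real m^4 + 2011327/62208000 * real m^5 + 1136621/62208000 * real m^6 + 3721/3483648 * real m^7)"
proof -
  have "(\<Sum>j=1..m-1. (real m - 2 * real j)^2 * (PC (real j) * PA (real (m - j)))) = (\<Sum>j=1..m-1. (real m - 2 * real j)^2 * (PC (real j) * PA (real m - real j)))"
    by (rule sum.cong) (auto simp: of_nat_diff)
  also have "... = (318287/1512000 * real (m - 1) - 486161/648000 * real (m - 1) * real m - 3499727/6220800 * real (m - 1) * real m^2 + 4357273/6220800 * real (m - 1) * real m^3 + 56101/51840 * real (m - 1)^2 + 38497/777600 * real (m - 1)^2 * real m - 9891809/4147200 * real (m - 1)^2 * real m^2 + 2447551/4147200 * real (m - 1)^2 * real m^3 + 242723/259200 * real (m - 1)^3 + 177677/64800 * real (m - 1)^3 * real m - 13880143/6220800 * real (m - 1)^3 * real m^2 + 1249967/6220800 * real (m - 1)^3 * real m^3 - 168589/259200 * real (m - 1)^4 + 555751/194400 * real (m - 1)^4 * real m - 652891/829440 * real (m - 1)^4 * real m^2 + 3721/165888 * real (m - 1)^4 * real m^3 - 709993/648000 * real (m - 1)^5 + 27979/27000 * real (m - 1)^5 * real m - 3721/41472 * real (m - 1)^5 * real m^2 - 27979/64800 * real (m - 1)^6 + 3721/31104 * real (m - 1)^6 *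 real m - 3721/72576 * real (m - 1)^7)" by (rule anti_wCA)
  also have "... = (318287/1512000 * real m + 27979/648000 * real m^2 - 168589/691200 * real m^3 - 764521/12441600 * real m^4 + 2011327/62208000 * real m^5 + 1136621/62208000 * real m^6 + 3721/3483648 * real m^7)" unfolding of_nat_diff[OF m] of_nat_1 by algebra
  finally show ?thesis .
qed

lemma conv_wCA: assumes m: "7 \<le> m" shows "(\<Sum>j=1..m-1. (real m - 2 * real j)^2 * (ga j * al (m-j))) = (11171/10800 - 5354029/4536000 * real m - 167011/648000 * real m^2 + 12413/414720 * real m^3 - 764521/12441600 * real m^4 + 2011327/62208000 * real m^5 + 1136621/62208000 * real m^6 + 3721/3483648 * real m^7)"
proof -
  have cs: "(\<Sum>j=1..m-1. (real m - 2 * real j)^2 * (ga j * al (m-j))) = (\<Sum>j=1..m-1. (real m - 2 * real j)^2 * (PC (real j) * PA (real (m - j)))) + (\<Sum>j=1..5. (real m - 2 * real j)^2 * ((ga j - PC (real j)) * PA (real (m-j)))) + (\<Sum>k=1..0. (real m - 2 * real (m-k))^2 * (PC (real (m-k)) * (al k - PA (real k))))"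
    by (rule conv_split[where p="\<lambda>j. PC (real j)" and q="\<lambda>j. PA (real j)" and w="\<lambda>j. (real m - 2 * real j)^2"]) (use m in \<open>auto simp: thr_ga thr_al\<close>)
  have mm: "1 \<le> m" using m by simp
  have d: "real (m - 1) = real m - 1" "real (m - 2) = real m - 2" "real (m - 3) = real m - 3" "real (m - 4) = real m - 4" "real (m - 5) = real m - 5" using m by (simp_all add: of_nat_diff)
  show ?thesis unfolding cs main_wCA[OF mm] unfolding sumE0 sumE5 d vals2 of_nat_1 of_nat_numeral PA_def PC_def power_one
    by algebra
qed

lemma Tset: "{j::nat. 1 \<le> j \<and> 2*j < n} = {1..(n-1) div 2}"
  unfolding set_eq_iff by (simp; presburger)

lemma core0_small: assumes "2 \<le> n" "n \<le> 8" shows "real (n^2) * al n = 3 * (2 * al (n-1)) + 3 * (2 * om0 (n-1)) + 2 * S30 n - T0 n"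
proof -
  have "n = 2 \<or> n = 3 \<or> n = 4 \<or> n = 5 \<or> n = 6 \<or> n = 7 \<or> n = 8" using assms by auto
  then show ?thesis unfolding S30_def T0_def Tset
    by (elim disjE) (simp_all add: sumS om0_vals om2_vals om4_vals al_def be_def ga_def PA_def PB_def PC_def)
qed

lemma core0_big: assumes n: "9 \<le> n" shows "real (n^2) * al n = 3 * (2 * al (n-1)) + 3 * (2 * om0 (n-1)) + 2 * S30 n - T0 n"
proof -
  have d1: "n - 1 - (n - 2) = 1" using n by simp
  have S: "S30 n = (\<Sum>j=1..n-1-1. al j * om0 (n-1-j))"
    unfolding S30_def by (rule sum_ext3) (use n in \<open>simp_all add: d1 om0_vals om2_vals om4_vals\<close>)
  have T0: "T0 n = (\<Sum>j\<in>{j. 1 \<le> j \<and> 2*j < n}. real ((n-2*j)^2) * (al j * al (n-j)))"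
    unfolding T0_def by (intro sum.cong refl) (simp add: algebra_simps)
  also have "... = 1/2 * (\<Sum>j=1..n-1. (real n - 2 * real j)^2 * (al j * al (n-j)))"
    by (rule T_sym[of "\<lambda>j k. al j * al k" n]) (simp add: algebra_simps)
  finally have T: "T0 n = 1/2 * ((\<Sum>j=1..n-1. (real n - 2 * real j)^2 * (al j * al (n-j))))" .
  have eS0: "(\<Sum>j=1..n-1-1. al j * om0 (n-1-j)) = (1 - 13/60 * real (n - 1) - 9/8 * real (n - 1)^2 + 5/24 * real (n - 1)^3 + 1/8 * real (n - 1)^4 + 1/120 * real (n - 1)^5)" by (rule conv_AO0) (use n in simp)
  have eT0: "(\<Sum>j=1..n-1. (real n - 2 * real j)^2 * (al j * al (n-j))) = (4/5 * real n - 1/3 * real n^2 - 5/6 * real n^3 + 1/3 * real n^4 + 1/30 * real n^5)" by (rule conv_wAA) (use n in simp)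
  have g: "al n = PA (real n)" "al (n-1) = PA (real (n-1))" "om0 (n-1) = Q0 (real (n-1))" using n by (simp_all add: thr_al thr_be thr_ga thr_om0)
  have r: "real (n-1) = real n - 1" using n by (simp add: of_nat_diff)
  show ?thesis unfolding S T eS0 eT0 g r of_nat_power PA_def PB_def PC_def Q0_def by algebra
qed

lemma core0: assumes "2 \<le> n" shows "real (n^2) * al n = 3 * (2 * al (n-1)) + 3 * (2 * om0 (n-1)) + 2 * S30 n - T0 n"
proof (cases "n \<le> 8")
  case True show ?thesis by (rule core0_small[OF assms True])
next
  case False then show ?thesis by (intro core0_big) simp
qed

lemma core2_small: assumes "2 \<le> n" "n \<le> 8" shows "real (n^2) * be n + al n = 3 * (2 * be (n-1)) + 3 * (2 * om2 (n-1)) + 2 * S32 n - T2 n"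
proof -
  have "n = 2 \<or> n = 3 \<or> n = 4 \<or> n = 5 \<or> n = 6 \<or> n = 7 \<or> n = 8" using assms by auto
  then show ?thesis unfolding S32_def T2_def Tset
    by (elim disjE) (simp_all add: sumS om0_vals om2_vals om4_vals al_def be_def ga_def PA_def PB_def PC_def)
qed

lemma core2_big: assumes n: "9 \<le> n" shows "real (n^2) * be n + al n = 3 * (2 * be (n-1)) + 3 * (2 * om2 (n-1)) + 2 * S32 n - T2 n"
proof -
  have d1: "n - 1 - (n - 2) = 1" using n by simp
  have S: "S32 n = (\<Sum>j=1..n-1-1. al j * om2 (n-1-j)) + (\<Sum>j=1..n-1-1. be j * om0 (n-1-j))"
    unfolding S32_def sum.distrib[symmetric] by (rule sum_ext3) (use n in \<open>simp_all add: d1 om0_vals om2_vals om4_vals\<close>)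
  have T0: "T2 n = (\<Sum>j\<in>{j. 1 \<le> j \<and> 2*j < n}. real ((n-2*j)^2) * (al j * be (n-j) + be j * al (n-j)))"
    unfolding T2_def by (intro sum.cong refl) (simp add: algebra_simps)
  also have "... = 1/2 * (\<Sum>j=1..n-1. (real n - 2 * real j)^2 * (al j * be (n-j) + be j * al (n-j)))"
    by (rule T_sym[of "\<lambda>j k. al j * be k + be j * al k" n]) (simp add: algebra_simps)
  also have "... = 1/2 * ((\<Sum>j=1..n-1. (real n - 2 * real j)^2 * (al j * be (n-j))) + (\<Sum>j=1..n-1. (real n - 2 * real j)^2 * (be j * al (n-j))))"
    unfolding distrib_left sum.distrib ..
  finally have T: "T2 n = 1/2 * ((\<Sum>j=1..n-1. (real n - 2 * real j)^2 * (al j * be (n-j))) + (\<Sum>j=1..n-1. (real n - 2 * real j)^2 * (be j * al (n-j))))" .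
  have eS0: "(\<Sum>j=1..n-1-1. al j * om2 (n-1-j)) = (- 43/72 + 2803/4320 * real (n - 1) + 18371/25920 * real (n - 1)^2 + 13/216 * real (n - 1)^3 - 427/2592 * real (n - 1)^4 - 61/1440 * real (n - 1)^5 - 61/25920 * real (n - 1)^6)" by (rule conv_AO2) (use n in simp)
  have eS1: "(\<Sum>j=1..n-1-1. be j * om0 (n-1-j)) = (- 43/144 + 2803/8640 * real (n - 1) + 18371/51840 * real (n - 1)^2 + 13/432 * real (n - 1)^3 - 427/5184 * real (n - 1)^4 - 61/2880 * real (n - 1)^5 - 61/51840 * real (n - 1)^6)" by (rule conv_BO0) (use n in simp)
  have eT0: "(\<Sum>j=1..n-1. (real n - 2 * real j)^2 * (al j * be (n-j))) = (- 1 - 11/180 * real n + 341/540 * real n^2 + 13/72 * real n^3 + 61/1728 * real n^4 - 61/720 * real n^5 - 61/8640 * real n^6)" by (rule conv_wAB) (use n in simp)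
  have eT1: "(\<Sum>j=1..n-1. (real n - 2 * real j)^2 * (be j * al (n-j))) = (- 1 - 11/180 * real n + 341/540 * real n^2 + 13/72 * real n^3 + 61/1728 * real n^4 - 61/720 * real n^5 - 61/8640 * real n^6)" by (rule conv_wBA) (use n in simp)
  have g: "be n = PB (real n)" "be (n-1) = PB (real (n-1))" "om2 (n-1) = Q2 (real (n-1))" "al n = PA (real n)" using n by (simp_all add: thr_al thr_be thr_ga thr_om2)
  have r: "real (n-1) = real n - 1" using n by (simp add: of_nat_diff)
  show ?thesis unfolding S T eS0 eS1 eT0 eT1 g r of_nat_power PA_def PB_def PC_def Q2_def by algebra
qed

lemma core2: assumes "2 \<le> n" shows "real (n^2) * be n + al n = 3 * (2 * be (n-1)) + 3 * (2 * om2 (n-1)) + 2 * S32 n - T2 n"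
proof (cases "n \<le> 8")
  case True show ?thesis by (rule core2_small[OF assms True])
next
  case False then show ?thesis by (intro core2_big) simp
qed

lemma core4_small: assumes "2 \<le> n" "n \<le> 8" shows "real (n^2) * ga n + be n = 3 * (2 * ga (n-1)) + 3 * (2 * om4 (n-1)) + 2 * S34 n - T4 n"
proof -
  have "n = 2 \<or> n = 3 \<or> n = 4 \<or> n = 5 \<or> n = 6 \<or> n = 7 \<or> n = 8" using assms by auto
  then show ?thesis unfolding S34_def T4_def Tset
    by (elim disjE) (simp_all add: sumS om0_vals om2_vals om4_vals al_def be_def ga_def PA_def PB_def PC_def)
qed

lemma core4_big: assumes n: "9 \<le> n" shows "real (n^2) * ga n + be n = 3 * (2 * ga (n-1)) + 3 * (2 * om4 (n-1)) + 2 * S34 n - T4 n"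
proof -
  have d1: "n - 1 - (n - 2) = 1" using n by simp
  have S: "S34 n = (\<Sum>j=1..n-1-1. al j * om4 (n-1-j)) + (\<Sum>j=1..n-1-1. be j * om2 (n-1-j)) + (\<Sum>j=1..n-1-1. ga j * om0 (n-1-j))"
    unfolding S34_def sum.distrib[symmetric] by (rule sum_ext3) (use n in \<open>simp_all add: d1 om0_vals om2_vals om4_vals\<close>)
  have T0: "T4 n = (\<Sum>j\<in>{j. 1 \<le> j \<and> 2*j < n}. real ((n-2*j)^2) * (al j * ga (n-j) + be j * be (n-j) + ga j * al (n-j)))"
    unfolding T4_def by (intro sum.cong refl) (simp add: algebra_simps)
  also have "... = 1/2 * (\<Sum>j=1..n-1. (real n - 2 * real j)^2 * (al j * ga (n-j) + be j * be (n-j) + ga j * al (n-j)))"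
    by (rule T_sym[of "\<lambda>j k. al j * ga k + be j * be k + ga j * al k" n]) (simp add: algebra_simps)
  also have "... = 1/2 * ((\<Sum>j=1..n-1. (real n - 2 * real j)^2 * (al j * ga (n-j))) + (\<Sum>j=1..n-1. (real n - 2 * real j)^2 * (be j * be (n-j))) + (\<Sum>j=1..n-1. (real n - 2 * real j)^2 * (ga j * al (n-j))))"
    unfolding distrib_left sum.distrib ..
  finally have T: "T4 n = 1/2 * ((\<Sum>j=1..n-1. (real n - 2 * real j)^2 * (al j * ga (n-j))) + (\<Sum>j=1..n-1. (real n - 2 * real j)^2 * (be j * be (n-j))) + (\<Sum>j=1..n-1. (real n - 2 * real j)^2 * (ga j * al (n-j))))" .
  have eS0: "(\<Sum>j=1..n-1-1. al j * om4 (n-1-j)) = (2401/21600 - 149778731/217728000 * real (n - 1) - 101015291/186624000 * real (n - 1)^2 - 273251/3732480 * real (n - 1)^3 + 4925069/37324800 * real (n - 1)^4 + 11435753/186624000 * real (n - 1)^5 + 800873/93312000 * real (n - 1)^6 + 3721/10450944 * real (n - 1)^7)" by (rule conv_AO4) (use n in simp)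
  have eS1: "(\<Sum>j=1..n-1-1. be j * om2 (n-1-j)) = (521/1728 - 319489/1451520 * real (n - 1) - 780007/1244160 * real (n - 1)^2 - 252601/3732480 * real (n - 1)^3 + 27145/248832 * real (n - 1)^4 + 152561/3732480 * real (n - 1)^5 + 3721/622080 * real (n - 1)^6 + 3721/13063680 * real (n - 1)^7)" by (rule conv_BO2) (use n in simp)
  have eS2: "(\<Sum>j=1..n-1-1. ga j * om0 (n-1-j)) = (- 3421/172800 - 3931783/13608000 * real (n - 1) - 21257383/186624000 * real (n - 1)^2 - 97967/4976640 * real (n - 1)^3 + 1444597/37324800 * real (n - 1)^4 + 79393/3888000 * real (n - 1)^5 + 260899/93312000 * real (n - 1)^6 + 3721/34836480 * real (n - 1)^7)" by (rule conv_CO0) (use n in simp)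
  have eT0: "(\<Sum>j=1..n-1. (real n - 2 * real j)^2 * (al j * ga (n-j))) = (11171/10800 - 5354029/4536000 * real n - 167011/648000 * real n^2 + 12413/414720 * real n^3 - 764521/12441600 * real n^4 + 2011327/62208000 * real n^5 + 1136621/62208000 * real n^6 + 3721/3483648 * real n^7)" by (rule conv_wAC) (use n in simp)
  have eT1: "(\<Sum>j=1..n-1. (real n - 2 * real j)^2 * (be j * be (n-j))) = (- 61/72 + 46421/20160 * real n - 62647/103680 * real n^2 - 474763/622080 * real n^3 + 671/7776 * real n^4 + 3721/51840 * real n^5 + 3721/311040 * real n^6 + 3721/4354560 * real n^7)" by (rule conv_wBB) (use n in simp)
  have eT2: "(\<Sum>j=1..n-1. (real n - 2 * real j)^2 * (ga j * al (n-j))) = (11171/10800 - 5354029/4536000 * real n - 167011/648000 * real n^2 + 12413/414720 * real n^3 - 764521/12441600 * real n^4 + 2011327/62208000 * real n^5 + 1136621/62208000 * real n^6 + 3721/3483648 * real n^7)" by (rule conv_wCA) (use n in simp)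
  have g: "ga n = PC (real n)" "ga (n-1) = PC (real (n-1))" "om4 (n-1) = Q4 (real (n-1))" "be n = PB (real n)" using n by (simp_all add: thr_al thr_be thr_ga thr_om4)
  have r: "real (n-1) = real n - 1" using n by (simp add: of_nat_diff)
  show ?thesis unfolding S T eS0 eS1 eS2 eT0 eT1 eT2 g r of_nat_power PA_def PB_def PC_def Q4_def by algebra
qed

lemma core4: assumes "2 \<le> n" shows "real (n^2) * ga n + be n = 3 * (2 * ga (n-1)) + 3 * (2 * om4 (n-1)) + 2 * S34 n - T4 n"
proof (cases "n \<le> 8")
  case True show ?thesis by (rule core4_small[OF assms True])
next
  case False then show ?thesis by (intro core4_big) simp
qed

lemma al1: "al 1 = 2" "al (Suc 0) = 2" by (simp_all add: al_def PA_def)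
lemma be1: "be 1 = -2" "be (Suc 0) = -2" by (simp_all add: be_def)
lemma ga1: "ga 1 = 2" "ga (Suc 0) = 2" by (simp_all add: ga_def)
lemma ga_small: "ga 2 = 63/16" "ga 3 = 2917/324" "ga 4 = 335485/20736" "ga 5 = 382273/14400"
  by (simp_all add: ga_def)
lemma ga_final: assumes "n \<ge> 6" shows "ga n / 2^n = (61^2 / 12^4) * ((real n + 1)^2 / 2^(n+1)) *
           (real n + (2^2 * 29^2 * 89) / (5^2 * 61^2))"
proof -
  have "ga n = PC (real n)" using assms by (simp add: ga_def)
  then show ?thesis unfolding PC_def by (simp add: power_add field_simps)
qed


definition goodN :: "real fps \<Rightarrow> nat \<Rightarrow> real \<Rightarrow> real \<Rightarrow> real \<Rightarrow> bool" where
  "goodN f k a b c \<longleftrightarrow> fps_nth f 0 = a / 2^k \<and> fps_nth f 1 = 0 \<and> fps_nth f 2 = b / 2^k \<and> fps_nth f 3 = 0 \<and> fps_nth f 4 = c / 2^k"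

lemma sum5: "(\<Sum>i::nat=0..4. g i) = g 0 + g 1 + g 2 + g 3 + (g 4 :: real)"
  by (simp add: eval_nat_numeral)
lemma sum3: "(\<Sum>i::nat=0..3. g i) = g 0 + g 1 + g 2 + (g 3 :: real)"
  by (simp add: eval_nat_numeral)
lemma sum2: "(\<Sum>i::nat=0..2. g i) = g 0 + g 1 + (g 2 :: real)"
  by (simp add: eval_nat_numeral)

lemma goodN_mult:
  assumes "goodN f i a b c" "goodN g k a' b' c'"
  shows "goodN (f * g) (i + k) (a * a') (a * b' + b * a') (a * c' + b * b' + c * a')"
proof -
  have f: "fps_nth f 0 = a / 2^i" "fps_nth f 1 = 0" "fps_nth f 2 = b / 2^i" "fps_nth f 3 = 0" "fps_nth f 4 = c / 2^i"
    using assms(1) unfolding goodN_def by auto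
  then have f1: "fps_nth f (Suc 0) = 0" by simp
  have g: "fps_nth g 0 = a' / 2^k" "fps_nth g 1 = 0" "fps_nth g 2 = b' / 2^k" "fps_nth g 3 = 0" "fps_nth g 4 = c' / 2^k"
    using assms(2) unfolding goodN_def by auto
  then have g1: "fps_nth g (Suc 0) = 0" by simp
  show ?thesis unfolding goodN_def fps_mult_nth sum5 sum3 sum2
    by (simp add: f g f1 g1 power_add field_simps)
qed

lemma goodN_sum:
  assumes "\<And>j. j \<in> S \<Longrightarrow> goodN (f j) k (a j) (b j) (c j)"
  shows "goodN (\<Sum>j\<in>S. f j) k (\<Sum>j\<in>S. a j) (\<Sum>j\<in>S. b j) (\<Sum>j\<in>S. c j)"
  using assms unfolding goodN_def by (simp add: fps_sum_nth sum_divide_distrib)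

lemma goodN_add:
  "goodN f k a b c \<Longrightarrow> goodN g k a' b' c' \<Longrightarrow> goodN (f + g) k (a + a') (b + b') (c + c')"
  unfolding goodN_def by (simp add: add_divide_distrib)

lemma goodN_diff:
  "goodN f k a b c \<Longrightarrow> goodN g k a' b' c' \<Longrightarrow> goodN (f - g) k (a - a') (b - b') (c - c')"
  unfolding goodN_def by (simp add: diff_divide_distrib)

lemma goodN_const:
  "goodN f k a b c \<Longrightarrow> goodN (fps_const r * f) k (r * a) (r * b) (r * c)"
  unfolding goodN_def by simp

lemma goodN_num:
  "goodN f k a b c \<Longrightarrow> goodN (numeral w * f) k (numeral w * a) (numeral w * b) (numeral w * c)"
  unfolding numeral_fps_const by (rule goodN_const)

lemma goodN_shift:
  "goodN f k a b c \<Longrightarrow> goodN f (Suc k) (2 * a) (2 * b) (2 * c)"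
  unfolding goodN_def by simp

lemma goodN_cong: "goodN f k a b c \<Longrightarrow> k = k' \<Longrightarrow> goodN f k' a b c" by simp

lemma goodN_solve:
  assumes eq: "(fps_X^2 + fps_const c) * u = R" and c: "c \<noteq> 0"
    and R: "goodN R n r0 r2 r4"
    and e0: "c * a = r0" and e2: "c * b + a = r2" and e4: "c * g + b = r4"
  shows "goodN u n a b g"
proof -
  have co: "c * fps_nth u k + (if k < 2 then 0 else fps_nth u (k - 2)) = fps_nth R k" for k
  proof -
    have "fps_nth R k = fps_nth ((fps_X^2 + fps_const c) * u) k" using eq by simp
    also have "... = fps_nth (fps_X^2 * u) k + fps_nth (fps_const c * u) k" by (simp add: distrib_right)
    finally show ?thesis by (simp add: fps_X_power_mult_nth)
  qed
  have r: "fps_nth R 0 = r0 / 2^n" "fps_nth R 1 = 0" "fps_nth R 2 = r2 / 2^n" "fps_nth R 3 = 0" "fps_nth R 4 = r4 / 2^n"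
    using R unfolding goodN_def by auto
  have "c * fps_nth u 0 = c * (a / 2^n)" using co[of 0] r e0 by simp
  then have u0: "fps_nth u 0 = a / 2^n" by (rule mult_left_cancel[OF c, THEN iffD1])
  have "c * fps_nth u 1 = 0" using co[of 1] r by simp
  then have u1: "fps_nth u 1 = 0" using c by simp
  have "c * fps_nth u 2 = fps_nth R 2 - fps_nth u 0" using co[of 2] by simp
  also have "... = (c * b + a) / 2^n - a / 2^n" using r e2 u0 by simp
  also have "... = c * (b / 2^n)" by (simp add: field_simps)
  finally have "c * fps_nth u 2 = c * (b / 2^n)" .
  then have u2: "fps_nth u 2 = b / 2^n" by (rule mult_left_cancel[OF c, THEN iffD1])
  have "c * fps_nth u 3 = 0" using co[of 3] r u1 by (simp add: numeral_3_eq_3)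
  then have u3: "fps_nth u 3 = 0" using c by simp
  have "c * fps_nth u 4 = fps_nth R 4 - fps_nth u 2" using co[of 4] by simp
  also have "... = (c * g + b) / 2^n - b / 2^n" using r e4 u2 by simp
  also have "... = c * (g / 2^n)" by (simp add: field_simps)
  finally have "c * fps_nth u 4 = c * (g / 2^n)" .
  then have u4: "fps_nth u 4 = g / 2^n" by (rule mult_left_cancel[OF c, THEN iffD1])
  show ?thesis unfolding goodN_def using u0 u1 u2 u3 u4 by simp
qed

definition Wf :: "nat \<Rightarrow> real fps" where "Wf m = (\<Sum>j=1..m-1. uu j * uu (m-j))"

lemma uu_rec:
  assumes "2 \<le> n"
  shows "(fps_X^2 + fps_const (real (n^2))) * uu n =
     3 * uu (n-1) + 3 * Wf (n-1) + (\<Sum>j1=1..n-3. uu j1 * Wf (n-1-j1))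
     - (\<Sum>j1\<in>{j. 1 \<le> j \<and> 2 * j < n}. fps_const (real ((n - 2 * j1) ^ 2)) * uu j1 * uu (n - j1))"
proof -
  obtain m where n: "n = Suc (Suc m)" using assms by (metis add_2_eq_Suc le_Suc_ex)
  define D where "D = (fps_X^2 + fps_const (real (n^2)) :: real fps)"
  have D0: "fps_nth D 0 \<noteq> 0" using n by (simp add: D_def)
  have inv: "D * inverse D = 1" using D0 by (rule inverse_mult_eq_1')
  have W1: "(\<Sum>j1 \<in> {1..n - 2}. uu j1 * uu (n - 1 - j1)) = Wf (n-1)"
    unfolding Wf_def by (simp add: numeral_2_eq_2)
  have W2: "(\<Sum>j1 \<in> {1..n - 3}. \<Sum>j2 \<in> {1..n - 2 - j1}. uu j1 * uu j2 * uu (n - 1 - j1 - j2))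
     = (\<Sum>j1=1..n-3. uu j1 * Wf (n-1-j1))"
  proof (rule sum.cong[OF refl])
    fix j1 assume "j1 \<in> {1..n-3}"
    have "Wf (n-1-j1) = (\<Sum>j2 \<in> {1..n - 2 - j1}. uu j2 * uu (n - 1 - j1 - j2))"
      unfolding Wf_def by (intro sum.cong) (auto simp: numeral_2_eq_2)
    then show "(\<Sum>j2 \<in> {1..n - 2 - j1}. uu j1 * uu j2 * uu (n - 1 - j1 - j2)) = uu j1 * Wf (n-1-j1)"
      by (simp add: sum_distrib_left mult.assoc)
  qed
  have "uu n = inverse D * (3 * uu (n - 1)
      + 3 * (\<Sum>j1 \<in> {1..n - 2}. uu j1 * uu (n - 1 - j1))
      + (\<Sum>j1 \<in> {1..n - 3}. \<Sum>j2 \<in> {1..n - 2 - j1}. uu j1 * uu j2 * uu (n - 1 - j1 - j2))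
      - (\<Sum>j1 \<in> {j. 1 \<le> j \<and> 2 * j < n}.
           fps_const (real ((n - 2 * j1) ^ 2)) * uu j1 * uu (n - j1)))"
    unfolding D_def n by (simp only: uu.simps Let_def)
  then have "D * uu n = 3 * uu (n - 1)
      + 3 * (\<Sum>j1 \<in> {1..n - 2}. uu j1 * uu (n - 1 - j1))
      + (\<Sum>j1 \<in> {1..n - 3}. \<Sum>j2 \<in> {1..n - 2 - j1}. uu j1 * uu j2 * uu (n - 1 - j1 - j2))
      - (\<Sum>j1 \<in> {j. 1 \<le> j \<and> 2 * j < n}.
           fps_const (real ((n - 2 * j1) ^ 2)) * uu j1 * uu (n - j1))"
    by (simp add: mult.assoc[symmetric] inv)
  then show ?thesis unfolding W1 W2 D_def .
qed

lemma main_ind: "goodN (uu n) n (al n) (be n) (ga n)"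
proof (induction n rule: less_induct)
  case (less n)
  consider "n = 0" | "n = 1" | "2 \<le> n" by linarith
  then show ?case
  proof cases
    case 1 then show ?thesis by (simp add: goodN_def al_def be_def ga_def)
  next
    case 2
    have eq: "(fps_X^2 + fps_const 1) * uu 1 = 1"
      by (simp add: inverse_mult_eq_1')
    have R: "goodN 1 1 2 0 0" unfolding goodN_def by simp
    show ?thesis unfolding 2
      by (rule goodN_solve[OF eq _ R]) (simp_all add: al1 be1 ga1)
  next
    case 3
    have IH: "goodN (uu j) j (al j) (be j) (ga j)" if "j < n" for j using less that by blast
    have W: "goodN (Wf m) m (om0 m) (om2 m) (om4 m)" if "m < n" for m
      unfolding Wf_def om0_def om2_def om4_def
    proof (rule goodN_sum)
      fix j assume j: "j \<in> {1..m-1}"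
      show "goodN (uu j * uu (m - j)) m (al j * al (m-j)) (al j * be (m - j) + be j * al (m - j))
              (al j * ga (m - j) + be j * be (m - j) + ga j * al (m - j))"
        by (rule goodN_cong[OF goodN_mult[OF IH IH]]) (use j that in auto)
    qed
    have "goodN (uu (n-1)) n (2 * al (n-1)) (2 * be (n-1)) (2 * ga (n-1))"
      using goodN_shift[OF IH[of "n-1"]] 3 by (simp add: Suc_diff_1)
    then have G1: "goodN (3 * uu (n-1)) n (3 * (2 * al (n-1))) (3 * (2 * be (n-1))) (3 * (2 * ga (n-1)))"
      by (rule goodN_num)
    have "goodN (Wf (n-1)) n (2 * om0 (n-1)) (2 * om2 (n-1)) (2 * om4 (n-1))"
      using goodN_shift[OF W[of "n-1"]] 3 by (simp add: Suc_diff_1)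
    then have G2: "goodN (3 * Wf (n-1)) n (3 * (2 * om0 (n-1))) (3 * (2 * om2 (n-1))) (3 * (2 * om4 (n-1)))"
      by (rule goodN_num)
    have G3': "goodN (\<Sum>j1=1..n-3. uu j1 * Wf (n-1-j1)) (n-1) (S30 n) (S32 n) (S34 n)"
      unfolding S30_def S32_def S34_def
    proof (rule goodN_sum)
      fix j assume j: "j \<in> {1..n-3}"
      show "goodN (uu j * Wf (n - 1 - j)) (n-1) (al j * om0 (n - 1 - j))
              (al j * om2 (n - 1 - j) + be j * om0 (n - 1 - j))
              (al j * om4 (n - 1 - j) + be j * om2 (n - 1 - j) + ga j * om0 (n - 1 - j))"
        by (rule goodN_cong[OF goodN_mult[OF IH W]]) (use j 3 in auto)
    qed
    have G3: "goodN (\<Sum>j1=1..n-3. uu j1 * Wf (n-1-j1)) n (2 * S30 n) (2 * S32 n) (2 * S34 n)"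
      using goodN_shift[OF G3'] 3 by (simp add: Suc_diff_1)
    have G4: "goodN (\<Sum>j1\<in>{j. 1 \<le> j \<and> 2 * j < n}. fps_const (real ((n - 2 * j1) ^ 2)) * uu j1 * uu (n - j1))
       n (T0 n) (T2 n) (T4 n)"
      unfolding T0_def T2_def T4_def
    proof (rule goodN_sum)
      fix j assume j: "j \<in> {j. 1 \<le> j \<and> 2 * j < n}"
      show "goodN (fps_const (real ((n - 2 * j) ^ 2)) * uu j * uu (n - j)) n
         (real ((n-2*j)^2) * al j * al (n-j))
         (real ((n-2*j)^2) * al j * be (n-j) + real ((n-2*j)^2) * be j * al (n-j))
         (real ((n-2*j)^2) * al j * ga (n-j) + real ((n-2*j)^2) * be j * be (n-j) + real ((n-2*j)^2) * ga j * al (n-j))"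
        by (rule goodN_cong[OF goodN_mult[OF goodN_const[OF IH] IH]]) (use j 3 in auto)
    qed
    have R: "goodN (3 * uu (n-1) + 3 * Wf (n-1) + (\<Sum>j1=1..n-3. uu j1 * Wf (n-1-j1))
     - (\<Sum>j1\<in>{j. 1 \<le> j \<and> 2 * j < n}. fps_const (real ((n - 2 * j1) ^ 2)) * uu j1 * uu (n - j1))) n
       (3 * (2 * al (n-1)) + 3 * (2 * om0 (n-1)) + 2 * S30 n - T0 n)
       (3 * (2 * be (n-1)) + 3 * (2 * om2 (n-1)) + 2 * S32 n - T2 n)
       (3 * (2 * ga (n-1)) + 3 * (2 * om4 (n-1)) + 2 * S34 n - T4 n)"
      by (intro goodN_diff goodN_add G1 G2 G3 G4)
    show ?thesis
      by (rule goodN_solve[OF uu_rec[OF 3] _ R]) (use 3 core0 core2 core4 in auto)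
  qed
qed

theorem proposition12:
  shows "fps_nth (uu 1) 4 = 1 \<and>
         fps_nth (uu 2) 4 = 63 / 64 \<and>
         fps_nth (uu 3) 4 = 2917 / 2592 \<and>
         fps_nth (uu 4) 4 = 335485 / 331776 \<and>
         fps_nth (uu 5) 4 = 382273 / 460800 \<and>
         (\<forall>n\<ge>6. fps_nth (uu n) 4 =
           (61^2 / 12^4) * ((real n + 1)^2 / 2^(n+1)) *
           (real n + (2^2 * 29^2 * 89) / (5^2 * 61^2)))"
proof -
  have c: "fps_nth (uu n) 4 = ga n / 2^n" for n using main_ind[of n] unfolding goodN_def by simp
  show ?thesis unfolding c using ga_final by (simp add: ga1 ga_small)
qed


end
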